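(* For all formulas $\alpha,\beta,\delta$: (1) $\alpha\land\beta\vDash\alpha$ and $\alpha\land\beta\vDash\beta$; (2) if $\alpha\vDash\beta$ then $\alpha\land\delta\vDash\beta$; (3) $\lnot\lnot\alpha\equiv\alpha$; (4) if $\alpha\vDash\beta$ then $\lnot\beta\vDash\lnot\alpha$; (5) $\mathbf f\vDash\beta$ and $\beta\vDash\mathbf t$.
   Context: Hilbert spaces and states: for $n\ge1$, $\mathcal H^{(n)}=(\mathbb C^2)^{\otimes n}$ with canonical basis $|x_1,\dots,x_n\rangle$ ($x_i\in\{0,1\}$, $|0\rangle=(1,0)$, $|1\rangle=(0,1)$); $\mathfrak D(\mathcal H^{(n)})$ is the set of density operators (qumixes). A truth-perspective is a unitary $\mathfrak T$ on $\mathbb C^2$, $\mathfrak T^{(n)}=\mathfrak T^{\otimes n}$. $^{\mathfrak T}P_1^{(n)}$ (resp. $^{\mathfrak T}P_0^{(n)}$) is the projection onto the span of the $\mathfrak T^{(n)}|x_1,\dots,x_n\rangle$ with $x_n=1$ (resp. $0$). $\mathtt p_{\mathfrak T}(\rho)=\mathrm{tr}(^{\mathfrak T}P_1^{(n)}\rho)$, and $\rho\preceq_{\mathfrak T}\sigma$ iff $\mathtt p_{\mathfrak T}(\rho)\le\mathtt p_{\mathfrak T}(\sigma)$. $Red^{(j_1,\dots,j_s)}_{[n_1,\dots,n_t]}(\rho)$ is the reduced state of $\rho$ on factors $j_1,\dots,j_s$ of $\mathcal H^{(n_1)}\otimes\cdots\otimes\mathcal H^{(n_t)}$. Gates (canonical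 basis, extended linearly): $\mathtt{NOT}^{(n)}|x_1..x_n\rangle=|x_1..x_{n-1}\rangle\otimes|1-x_n\rangle$; $\sqrt{\mathtt I}^{(n)}|x_1..x_n\rangle=|x_1..x_{n-1}\rangle\otimes\frac1{\sqrt2}((-1)^{x_n}|x_n\rangle+|1-x_n\rangle)$; $\sqrt{\mathtt{NOT}}^{(n)}|x_1..x_n\rangle=|x_1..x_{n-1}\rangle\otimes(\frac{1-i}2|x_n\rangle+\frac{1+i}2|1-x_n\rangle)$; $\mathtt{XOR}^{(m,n)}|x_1..x_m,y_1..y_n\rangle=|x_1..x_m,y_1..y_{n-1}\rangle\otimes|x_m\oplus y_n\rangle$; $\mathtt T^{(m,n,p)}|x_1..x_m,y_1..y_n,z_1..z_p\rangle=|x_1..x_m,y_1..y_n,z_1..z_{p-1}\rangle\otimes|x_my_n\oplus z_p\rangle$ ($\oplus$ addition mod 2). For a gate $G$ on $\mathcal H^{(n)}$: $G_{\mathfrak T}=\mathfrak T^{(n)}G\mathfrak T^{(n)\dagger}$, $^{\mathfrak D}G_{\mathfrak T}(\rho)=G_{\mathfrak T}\rho G_{\mathfrak T}^\dagger$. Language: formulas built from atomic formulas (including distinguished atoms $\mathbf t,\mathbf f$) with unary $\lnot,\sqrt{id},\sqrt\lnot$, binary $\uplus$, ternary $\intercal$; $\alpha\land\beta:=\intercal(\alpha,\beta,\mathbf f)$, $\alpha\lor\beta:=\lnot(\lnot\alpha\land\lnot\beta)$. $At(\alpha)$ = number of occurrences of atomic formulas in $\alpha$. Syntactical tree: $Level_1^\alpha=(\alpha)$;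 $Level_{i+1}^\alpha$ is obtained from $Level_i^\alpha=(\beta_1,\dots,\beta_r)$ by replacing each non-atomic $\beta_j$ by its immediate subformulas (arguments, in order) and keeping atomic $\beta_j$; the last level $Level_h^\alpha$ lists all atomic occurrences. $\mathcal H^{(At\alpha)}=\bigotimes_j\mathcal H^{(At\beta_j)}$. The $\mathfrak T$-gate $G^\alpha_{\mathfrak T(i)}$ ($1\le i<h$) is the tensor product over $j$ of: identity of $\mathbb C^2$ if $\beta_j$ atomic; $\mathtt{NOT}_{\mathfrak T}^{(At\beta)}$, $\sqrt{\mathtt I}_{\mathfrak T}^{(At\beta)}$, $\sqrt{\mathtt{NOT}}_{\mathfrak T}^{(At\beta)}$ for $\lnot\beta,\sqrt{id}\beta,\sqrt\lnot\beta$; $\mathtt{XOR}_{\mathfrak T}^{(At\beta',At\beta'')}$ for $\beta'\uplus\beta''$; $\mathtt T_{\mathfrak T}^{(At\beta',At\beta'',At\beta''')}$ for $\intercal(\beta',\beta'',\beta''')$. Holistic model: a map $\mathtt{Hol}_{\mathfrak T}$ assigning to each level $Level_i^\alpha$ of each formula $\alpha$ a qumix in $\mathfrak D(\mathcal H^{(At\alpha)})$ such that (a) $\mathtt{Hol}_{\mathfrak T}(Level_i^\alpha)={}^{\mathfrak D}G^\alpha_{\mathfrak T(i)}(\mathtt{Hol}_{\mathfrak T}(Level_{i+1}^\alpha))$ for $1\le i<h$; (b) (normality) for each $\gamma$, with the contextual meaning of the occurrence $\beta_j$ in $Level_i^\gamma=(\beta_1,\dots,\beta_r)$ defined as $Red^{(j)}_{[At\beta_1,\dots,At\beta_r]}(\mathtt{Hol}_{\mathfrak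 T}(Level_i^\gamma))$, all occurrences of the same subformula $\beta$ in the tree of $\gamma$ have the same contextual meaning, denoted $\mathtt{Hol}^\gamma_{\mathfrak T}(\beta)$; (c) every occurrence of $\mathbf f$ (resp. $\mathbf t$) has contextual meaning $^{\mathfrak T}P_0^{(1)}$ (resp. $^{\mathfrak T}P_1^{(1)}$). Logical consequence: $\alpha\vDash\beta$ iff for every truth-perspective $\mathfrak T$, every formula $\gamma$ having both $\alpha$ and $\beta$ as subformulas (a formula counts as a subformula of itself), and every holistic model $\mathtt{Hol}_{\mathfrak T}$, $\mathtt{Hol}^\gamma_{\mathfrak T}(\alpha)\preceq_{\mathfrak T}\mathtt{Hol}^\gamma_{\mathfrak T}(\beta)$. $\alpha\equiv\beta$ means $\alpha\vDash\beta$ and $\beta\vDash\alpha$. *)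

theory Defs
  imports Complex_Main
begin

section \<open>Operators on n qubits, indexed by canonical basis bit strings\<close>

text \<open>An operator on H^(n) = (C^2)^(tensor n) is represented by its matrix in the
canonical basis: A xs ys = <xs|A|ys>, for bit strings xs, ys of length n
(True = 1, False = 0).  All operators built below vanish off length-n strings.\<close>

type_synonym qop = "bool list \<Rightarrow> bool list \<Rightarrow> complex"

definition bits :: "nat \<Rightarrow> bool list set" where
  "bits n = {xs. length xs = n}"

definition mmult :: "nat \<Rightarrow> qop \<Rightarrow> qop \<Rightarrow> qop" where
  "mmult n A B = (\<lambda>x y. \<Sum>z\<in>bits n. A x z * B z y)"

definition adj :: "qop \<Rightarrow> qop" where
  "adj A = (\<lambda>x y. cnj (A y x))"

definition idop :: "nat \<Rightarrow> qop" where
  "idop n = (\<lambda>x y. if length x = n \<and> length y = n \<and> x = y then 1 else 0)"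

definition qtrace :: "nat \<Rightarrow> qop \<Rightarrow> complex" where
  "qtrace n A = (\<Sum>x\<in>bits n. A x x)"

definition density :: "nat \<Rightarrow> qop \<Rightarrow> bool" where
  "density n \<rho> \<longleftrightarrow>
     (\<forall>x y. (length x \<noteq> n \<or> length y \<noteq> n) \<longrightarrow> \<rho> x y = 0) \<and>
     adj \<rho> = \<rho> \<and>
     (\<forall>v::bool list \<Rightarrow> complex.
        Im (\<Sum>x\<in>bits n. \<Sum>y\<in>bits n. cnj (v x) * \<rho> x y * v y) = 0 \<and>
        0 \<le> Re (\<Sum>x\<in>bits n. \<Sum>y\<in>bits n. cnj (v x) * \<rho> x y * v y)) \<and>
     qtrace n \<rho> = 1"

definition tensor :: "nat \<Rightarrow> qop \<Rightarrow> nat \<Rightarrow> qop \<Rightarrow> qop" where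
  "tensor n A m B = (\<lambda>x y. if length x = n + m \<and> length y = n + m
       then A (take n x) (take n y) * B (drop n x) (drop n y) else 0)"

fun tensor_list :: "(nat \<times> qop) list \<Rightarrow> qop" where
  "tensor_list [] = idop 0"
| "tensor_list ((n, A) # rest) = tensor n A (sum_list (map fst rest)) (tensor_list rest)"

text \<open>Reduced state on the j-th factor (0-based) of H^(n_1) x ... x H^(n_r).\<close>
definition red :: "nat list \<Rightarrow> nat \<Rightarrow> qop \<Rightarrow> qop" where
  "red ns j \<rho> = (\<lambda>x y.
     (let off = sum_list (take j ns); k = ns ! j; rest = sum_list (drop (Suc j) ns) in
      if length x = k \<and> length y = k
      then \<Sum>u\<in>bits off. \<Sum>w\<in>bits rest. \<rho> (u @ x @ w) (u @ y @ w)
      else 0))"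

text \<open>A single-qubit operator, indexed by a bit: U a b = <a|U|b>.\<close>
definition unitary1 :: "(bool \<Rightarrow> bool \<Rightarrow> complex) \<Rightarrow> bool" where
  "unitary1 U \<longleftrightarrow>
     (\<forall>a b. (\<Sum>c\<in>UNIV. cnj (U c a) * U c b) = (if a = b then 1 else 0)) \<and>
     (\<forall>a b. (\<Sum>c\<in>UNIV. U a c * cnj (U b c)) = (if a = b then 1 else 0))"

definition tpow :: "nat \<Rightarrow> (bool \<Rightarrow> bool \<Rightarrow> complex) \<Rightarrow> qop" where
  "tpow n T = (\<lambda>x y. if length x = n \<and> length y = n
       then (\<Prod>i<n. T (x ! i) (y ! i)) else 0)"

text \<open>The T-projection onto span of T^(n)|x_1..x_n> with x_n = b.\<close>
definition projT :: "(bool \<Rightarrow> bool \<Rightarrow> complex) \<Rightarrow> nat \<Rightarrow> bool \<Rightarrow> qop" where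
  "projT T n b = (\<lambda>x y. \<Sum>z\<in>{z\<in>bits n. last z = b}. tpow n T x z * cnj (tpow n T y z))"

text \<open>Probability value p_T(rho) = tr(P_1 rho) (real part; it is real for qumixes).\<close>
definition probT :: "(bool \<Rightarrow> bool \<Rightarrow> complex) \<Rightarrow> nat \<Rightarrow> qop \<Rightarrow> real" where
  "probT T n \<rho> = Re (qtrace n (mmult n (projT T n True) \<rho>))"

definition preceqT :: "(bool \<Rightarrow> bool \<Rightarrow> complex) \<Rightarrow> nat \<Rightarrow> qop \<Rightarrow> qop \<Rightarrow> bool" where
  "preceqT T n \<rho> \<sigma> \<longleftrightarrow> probT T n \<rho> \<le> probT T n \<sigma>"

text \<open>A gate on H^(n) acting by x_1..x_{n-1} fixed and the last qubit mapped to
  sum_b (amp y b)|b>, where y is the input basis string.\<close>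
definition lastgate :: "nat \<Rightarrow> (bool list \<Rightarrow> bool \<Rightarrow> complex) \<Rightarrow> qop" where
  "lastgate n amp = (\<lambda>x y. if length x = n \<and> length y = n \<and> butlast x = butlast y
       then amp y (last x) else 0)"

definition NOTg :: "nat \<Rightarrow> qop" where
  "NOTg n = lastgate n (\<lambda>y b. if b = (\<not> last y) then 1 else 0)"

definition SqrtIg :: "nat \<Rightarrow> qop" where
  "SqrtIg n = lastgate n (\<lambda>y b.
     if b = last y then (if last y then - complex_of_real (1 / sqrt 2) else complex_of_real (1 / sqrt 2))
     else complex_of_real (1 / sqrt 2))"

definition SqrtNOTg :: "nat \<Rightarrow> qop" where
  "SqrtNOTg n = lastgate n (\<lambda>y b. if b = last y then (1 - \<i>) / 2 else (1 + \<i>) / 2)"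

definition XORg :: "nat \<Rightarrow> nat \<Rightarrow> qop" where
  "XORg m n = lastgate (m + n) (\<lambda>y b. if b = (y ! (m - 1) \<noteq> last y) then 1 else 0)"

definition Toffg :: "nat \<Rightarrow> nat \<Rightarrow> nat \<Rightarrow> qop" where
  "Toffg m n p = lastgate (m + n + p)
     (\<lambda>y b. if b = ((y ! (m - 1) \<and> y ! (m + n - 1)) \<noteq> last y) then 1 else 0)"

definition gateT :: "(bool \<Rightarrow> bool \<Rightarrow> complex) \<Rightarrow> nat \<Rightarrow> qop \<Rightarrow> qop" where
  "gateT T n G = mmult n (mmult n (tpow n T) G) (adj (tpow n T))"

definition applyD :: "nat \<Rightarrow> qop \<Rightarrow> qop \<Rightarrow> qop" where
  "applyD n G \<rho> = mmult n (mmult n G \<rho>) (adj G)"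

datatype form =
    Atom nat
  | Tt
  | Ff
  | Neg form
  | SqId form
  | SqNeg form
  | Xr form form
  | Tf form form form

definition And :: "form \<Rightarrow> form \<Rightarrow> form" where
  "And a b = Tf a b Ff"

definition Or :: "form \<Rightarrow> form \<Rightarrow> form" where
  "Or a b = Neg (And (Neg a) (Neg b))"

fun atomic :: "form \<Rightarrow> bool" where
  "atomic (Atom _) = True"
| "atomic Tt = True"
| "atomic Ff = True"
| "atomic _ = False"

fun At :: "form \<Rightarrow> nat" where
  "At (Atom _) = 1"
| "At Tt = 1"
| "At Ff = 1"
| "At (Neg a) = At a"
| "At (SqId a) = At a"
| "At (SqNeg a) = At a"
| "At (Xr a b) = At a + At b"
| "At (Tf a b c) = At a + At b + At c"

fun expand :: "form \<Rightarrow> form list" where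
  "expand (Neg a) = [a]"
| "expand (SqId a) = [a]"
| "expand (SqNeg a) = [a]"
| "expand (Xr a b) = [a, b]"
| "expand (Tf a b c) = [a, b, c]"
| "expand a = [a]"

text \<open>level a i is Level_{i+1}^a of the paper (0-based).\<close>
fun level :: "form \<Rightarrow> nat \<Rightarrow> form list" where
  "level a 0 = [a]"
| "level a (Suc i) = concat (map expand (level a i))"

text \<open>depth a = h - 1, where h is the height (number of levels) of the tree of a.\<close>
fun depth :: "form \<Rightarrow> nat" where
  "depth (Neg a) = Suc (depth a)"
| "depth (SqId a) = Suc (depth a)"
| "depth (SqNeg a) = Suc (depth a)"
| "depth (Xr a b) = Suc (max (depth a) (depth b))"
| "depth (Tf a b c) = Suc (max (depth a) (max (depth b) (depth c)))"
| "depth _ = 0"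

fun nodegate :: "(bool \<Rightarrow> bool \<Rightarrow> complex) \<Rightarrow> form \<Rightarrow> qop" where
  "nodegate T (Neg a) = gateT T (At a) (NOTg (At a))"
| "nodegate T (SqId a) = gateT T (At a) (SqrtIg (At a))"
| "nodegate T (SqNeg a) = gateT T (At a) (SqrtNOTg (At a))"
| "nodegate T (Xr a b) = gateT T (At a + At b) (XORg (At a) (At b))"
| "nodegate T (Tf a b c) = gateT T (At a + At b + At c) (Toffg (At a) (At b) (At c))"
| "nodegate T _ = idop 1"

text \<open>The T-gate G^a_{T(i+1)} of the tree of a (levels 0-based).\<close>
definition levelgate :: "(bool \<Rightarrow> bool \<Rightarrow> complex) \<Rightarrow> form \<Rightarrow> nat \<Rightarrow> qop" where
  "levelgate T a i = tensor_list (map (\<lambda>b. (At b, nodegate T b)) (level a i))"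

definition occurrence :: "form \<Rightarrow> form \<Rightarrow> nat \<Rightarrow> nat \<Rightarrow> bool" where
  "occurrence g b i j \<longleftrightarrow> i \<le> depth g \<and> j < length (level g i) \<and> level g i ! j = b"

text \<open>b is a subformula of g (g counts as a subformula of itself).\<close>
definition subformula :: "form \<Rightarrow> form \<Rightarrow> bool" where
  "subformula b g \<longleftrightarrow> (\<exists>i j. occurrence g b i j)"

definition ctxmean :: "(form \<Rightarrow> nat \<Rightarrow> qop) \<Rightarrow> form \<Rightarrow> nat \<Rightarrow> nat \<Rightarrow> qop" where
  "ctxmean Hol g i j = red (map At (level g i)) j (Hol g i)"

definition holistic :: "(bool \<Rightarrow> bool \<Rightarrow> complex) \<Rightarrow> (form \<Rightarrow> nat \<Rightarrow> qop) \<Rightarrow> bool" where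
  "holistic T Hol \<longleftrightarrow>
     (\<forall>g i. i \<le> depth g \<longrightarrow> density (At g) (Hol g i)) \<and>
     (\<forall>g i. i < depth g \<longrightarrow>
        Hol g i = applyD (At g) (levelgate T g i) (Hol g (Suc i))) \<and>
     (\<forall>g i j i' j'. occurrence g (level g i ! j) i j \<and> occurrence g (level g i ! j) i' j' \<longrightarrow>
        ctxmean Hol g i j = ctxmean Hol g i' j') \<and>
     (\<forall>g i j. occurrence g Ff i j \<longrightarrow> ctxmean Hol g i j = projT T 1 False) \<and>
     (\<forall>g i j. occurrence g Tt i j \<longrightarrow> ctxmean Hol g i j = projT T 1 True)"

text \<open>Hol^g(b): the (well-defined, by normality) contextual meaning of b in g.\<close>
definition holmean :: "(form \<Rightarrow> nat \<Rightarrow> qop) \<Rightarrow> form \<Rightarrow> form \<Rightarrow> qop" where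
  "holmean Hol g b = (SOME \<rho>. \<exists>i j. occurrence g b i j \<and> \<rho> = ctxmean Hol g i j)"

definition consequence :: "form \<Rightarrow> form \<Rightarrow> bool" (infix "\<Turnstile>" 50) where
  "a \<Turnstile> b \<longleftrightarrow>
     (\<forall>T. unitary1 T \<longrightarrow> (\<forall>g. subformula a g \<and> subformula b g \<longrightarrow>
        (\<forall>Hol. holistic T Hol \<longrightarrow>
           probT T (At a) (holmean Hol g a) \<le> probT T (At b) (holmean Hol g b))))"

definition equivalent :: "form \<Rightarrow> form \<Rightarrow> bool" (infix "\<equiv>\<^sub>f" 50) where
  "a \<equiv>\<^sub>f b \<longleftrightarrow> a \<Turnstile> b \<and> b \<Turnstile> a"

end

theory Submission
  imports Defs
begin

lemma finite_bits[simp]: "finite (bits n)"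
proof -
  have "bits n = {xs. set xs \<subseteq> (UNIV::bool set) \<and> length xs = n}" by (auto simp: bits_def)
  thus ?thesis using finite_lists_length_eq[of "UNIV::bool set" n] by simp
qed

lemma mem_bits[simp]: "x \<in> bits n \<longleftrightarrow> length x = n" by (simp add: bits_def)

lemma bits_append_eq: "bits (a+b) = (\<lambda>(u,w). u@w) ` (bits a \<times> bits b)"
proof (rule set_eqI, rule iffI)
  fix v assume "v \<in> bits (a+b)"
  hence "v = take a v @ drop a v" "take a v \<in> bits a" "drop a v \<in> bits b" by auto
  thus "v \<in> (\<lambda>(u,w). u@w) ` (bits a \<times> bits b)" by (metis (no_types, lifting) SigmaI case_prod_conv image_eqI)
qed auto

lemma sum_bits_append: "(\<Sum>v\<in>bits (a+b). f v) = (\<Sum>u\<in>bits a. \<Sum>w\<in>bits b. f (u@w))"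
proof -
  have inj: "inj_on (\<lambda>(u,w). u@w) (bits a \<times> bits b)" by (auto simp: inj_on_def)
  have "(\<Sum>v\<in>bits (a+b). f v) = (\<Sum>p\<in>bits a \<times> bits b. f (case p of (u,w) \<Rightarrow> u@w))"
    unfolding bits_append_eq using sum.reindex[OF inj, of f] by (simp add: comp_def)
  also have "\<dots> = (\<Sum>u\<in>bits a. \<Sum>w\<in>bits b. f (u@w))"
    by (simp add: sum.cartesian_product split_def)
  finally show ?thesis .
qed

lemma sum_bits3: "(\<Sum>v\<in>bits (a+k+c). f v) = (\<Sum>u\<in>bits a. \<Sum>x\<in>bits k. \<Sum>w\<in>bits c. f (u@x@w))"
  by (simp add: sum_bits_append add.assoc)

lemma bits_0[simp]: "bits 0 = {[]}" by (auto simp: bits_def)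

lemma sum_bits_Suc: "(\<Sum>v\<in>bits (Suc n). f v) = (\<Sum>c\<in>UNIV. \<Sum>w\<in>bits n. f (c#w))"
proof -
  have "(\<Sum>v\<in>bits (1+n). f v) = (\<Sum>u\<in>bits 1. \<Sum>w\<in>bits n. f (u@w))" by (rule sum_bits_append)
  moreover have "bits 1 = (\<lambda>c. [c]) ` UNIV" by (auto simp: bits_def length_Suc_conv)
  ultimately show ?thesis by (simp add: sum.reindex inj_on_def)
qed

lemma sum_prod_bits: "(\<Sum>z\<in>bits n. \<Prod>i<n. (f::nat\<Rightarrow>bool\<Rightarrow>complex) i (z!i)) = (\<Prod>i<n. \<Sum>c\<in>UNIV. f i c)"
proof (induction n arbitrary: f)
  case 0 then show ?case by simp
next
  case (Suc n)
  have "(\<Sum>z\<in>bits (Suc n). \<Prod>i<Suc n. f i (z!i)) = (\<Sum>c\<in>UNIV. \<Sum>w\<in>bits n. \<Prod>i<Suc n. f i ((c#w)!i))"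
    by (rule sum_bits_Suc)
  also have "\<dots> = (\<Sum>c\<in>UNIV. \<Sum>w\<in>bits n. f 0 c * (\<Prod>i<n. f (Suc i) (w!i)))"
    by (simp only: prod.lessThan_Suc_shift) simp
  also have "\<dots> = (\<Sum>c\<in>UNIV. f 0 c * (\<Prod>i<n. \<Sum>c\<in>UNIV. f (Suc i) c))"
  proof (rule sum.cong[OF refl])
    fix c
    have "(\<Sum>w\<in>bits n. f 0 c * (\<Prod>i<n. f (Suc i) (w!i))) = f 0 c * (\<Sum>w\<in>bits n. (\<Prod>i<n. f (Suc i) (w!i)))"
      by (rule sum_distrib_left[symmetric])
    then show "(\<Sum>w\<in>bits n. f 0 c * (\<Prod>i<n. f (Suc i) (w!i))) = f 0 c * (\<Prod>i<n. \<Sum>c\<in>UNIV. f (Suc i) c)"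
      using Suc.IH[of "\<lambda>i. f (Suc i)"] by simp
  qed
  also have "\<dots> = (\<Prod>i<Suc n. \<Sum>c\<in>UNIV. f i c)"
    by (simp only: prod.lessThan_Suc_shift sum_distrib_right)
  finally show ?case .
qed



definition supp :: "nat \<Rightarrow> qop \<Rightarrow> bool" where
  "supp n A \<longleftrightarrow> (\<forall>x y. (length x \<noteq> n \<or> length y \<noteq> n) \<longrightarrow> A x y = 0)"

lemma suppD: "supp n A \<Longrightarrow> length x \<noteq> n \<or> length y \<noteq> n \<Longrightarrow> A x y = 0"
  by (simp add: supp_def)

lemma mmult_assoc: "mmult n (mmult n A B) C = mmult n A (mmult n B C)"
  by (auto simp: mmult_def sum_distrib_left sum_distrib_right mult.assoc intro!: ext sum.swap[THEN trans])

lemma adj_mmult: "adj (mmult n A B) = mmult n (adj B) (adj A)"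
  by (auto simp: mmult_def adj_def mult.commute intro!: ext)

lemma adj_adj[simp]: "adj (adj A) = A"
  by (simp add: adj_def)

lemma supp_mmult[simp]: "supp n A \<Longrightarrow> supp n B \<Longrightarrow> supp n (mmult n A B)"
  by (auto simp: supp_def mmult_def)

lemma supp_adj[simp]: "supp n A \<Longrightarrow> supp n (adj A)"
  by (auto simp: supp_def adj_def)

lemma supp_idop[simp]: "supp n (idop n)"
  by (auto simp: supp_def idop_def)

lemma supp_tpow[simp]: "supp n (tpow n T)"
  by (auto simp: supp_def tpow_def)

lemma supp_lastgate[simp]: "supp n (lastgate n amp)"
  by (auto simp: supp_def lastgate_def)

lemma supp_applyD[simp]: "supp n G \<Longrightarrow> supp n (applyD n G \<rho>)"
  by (auto simp: supp_def applyD_def mmult_def adj_def)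

lemma supp_gateT[simp]: "supp n (gateT T n G)"
  by (auto simp: supp_def gateT_def mmult_def adj_def tpow_def)

lemma supp_tensor[simp]: "supp (n+m) (tensor n A m B)"
  by (auto simp: supp_def tensor_def)

lemma idop_mmult: "supp n A \<Longrightarrow> mmult n (idop n) A = A"
proof (rule ext, rule ext)
  fix x y assume s: "supp n A"
  show "mmult n (idop n) A x y = A x y"
  proof (cases "length x = n")
    case True
    have "mmult n (idop n) A x y = (\<Sum>z\<in>bits n. if z = x then A z y else 0)"
      unfolding mmult_def idop_def using True by (intro sum.cong) auto
    also have "\<dots> = A x y" using True by (simp add: sum.delta)
    finally show ?thesis .
  next
    case False then show ?thesis using s by (simp add: mmult_def idop_def supp_def)
  qed
qed

lemma mmult_idop: "supp n A \<Longrightarrow> mmult n A (idop n) = A"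
proof -
  assume "supp n A"
  hence "adj (mmult n (idop n) (adj A)) = A" by (simp add: idop_mmult)
  moreover have "adj (idop n) = idop n" by (auto simp: adj_def idop_def intro!: ext)
  ultimately show ?thesis by (simp add: adj_mmult)
qed

lemma prod_delta_lists:
  assumes "length x = n" "length y = n"
  shows "(\<Prod>i<n. (if x!i = y!i then 1 else 0)::complex) = (if x = y then 1 else 0)"
proof (cases "x = y")
  case True then show ?thesis by simp
next
  case False
  then obtain i where "i < n" "x!i \<noteq> y!i" using assms by (metis nth_equalityI)
  hence "(\<Prod>i<n. (if x!i = y!i then 1 else 0)::complex) = 0"
    by (intro prod_zero) auto
  then show ?thesis using False by simp
qed

lemma tpow_unit1:
  assumes "unitary1 T"
  shows "mmult n (adj (tpow n T)) (tpow n T) = idop n"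
proof (rule ext, rule ext)
  fix x y
  show "mmult n (adj (tpow n T)) (tpow n T) x y = idop n x y"
  proof (cases "length x = n \<and> length y = n")
    case True
    have "mmult n (adj (tpow n T)) (tpow n T) x y
        = (\<Sum>z\<in>bits n. \<Prod>i<n. cnj (T (z!i) (x!i)) * T (z!i) (y!i))"
      unfolding mmult_def adj_def tpow_def using True
      by (intro sum.cong) (auto simp: prod.distrib)
    also have "\<dots> = (\<Prod>i<n. \<Sum>c\<in>UNIV. cnj (T c (x!i)) * T c (y!i))"
      by (rule sum_prod_bits)
    also have "\<dots> = (\<Prod>i<n. (if x!i = y!i then 1 else 0))"
      using assms unfolding unitary1_def by simp
    also have "\<dots> = idop n x y" using True prod_delta_lists[of x n y] by (simp add: idop_def)
    finally show ?thesis .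
  next
    case False then show ?thesis by (auto simp: mmult_def adj_def tpow_def idop_def)
  qed
qed

lemma tpow_unit2:
  assumes "unitary1 T"
  shows "mmult n (tpow n T) (adj (tpow n T)) = idop n"
proof (rule ext, rule ext)
  fix x y
  show "mmult n (tpow n T) (adj (tpow n T)) x y = idop n x y"
  proof (cases "length x = n \<and> length y = n")
    case True
    have "mmult n (tpow n T) (adj (tpow n T)) x y
        = (\<Sum>z\<in>bits n. \<Prod>i<n. T (x!i) (z!i) * cnj (T (y!i) (z!i)))"
      unfolding mmult_def adj_def tpow_def using True
      by (intro sum.cong) (auto simp: prod.distrib)
    also have "\<dots> = (\<Prod>i<n. \<Sum>c\<in>UNIV. T (x!i) c * cnj (T (y!i) c))"
      by (rule sum_prod_bits)
    also have "\<dots> = (\<Prod>i<n. (if x!i = y!i then 1 else 0))"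
      using assms unfolding unitary1_def by simp
    also have "\<dots> = idop n x y" using True prod_delta_lists[of x n y] by (simp add: idop_def)
    finally show ?thesis .
  next
    case False then show ?thesis by (auto simp: mmult_def adj_def tpow_def idop_def)
  qed
qed



lemma sum_bits_snoc: "1 \<le> n \<Longrightarrow> (\<Sum>v\<in>bits n. f v) = (\<Sum>p\<in>bits (n-1). \<Sum>c\<in>UNIV. f (p@[c]))"
proof -
  assume "1 \<le> n"
  hence "n = (n-1) + 1" by simp
  hence "(\<Sum>v\<in>bits n. f v) = (\<Sum>p\<in>bits (n-1). \<Sum>q\<in>bits 1. f (p@q))"
    by (metis sum_bits_append)
  moreover have "bits 1 = (\<lambda>c. [c]) ` UNIV" by (auto simp: bits_def length_Suc_conv)
  ultimately show ?thesis by (simp add: sum.reindex inj_on_def)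
qed

lemma butlast_eq_last_eq: "length y = length y' \<Longrightarrow> y \<noteq> [] \<Longrightarrow> butlast y = butlast y' \<Longrightarrow> (y = y') = (last y = last y')"
  by (metis append_butlast_last_id length_0_conv)

lemma lastgate_unit:
  assumes n: "1 \<le> n"
    and c: "\<And>y y'. length y = n \<Longrightarrow> length y' = n \<Longrightarrow> butlast y = butlast y' \<Longrightarrow>
            (\<Sum>b\<in>UNIV. cnj (amp y b) * amp y' b) = (if y = y' then 1 else 0)"
  shows "mmult n (adj (lastgate n amp)) (lastgate n amp) = idop n"
proof (rule ext, rule ext)
  fix y y'
  show "mmult n (adj (lastgate n amp)) (lastgate n amp) y y' = idop n y y'"
  proof (cases "length y = n \<and> length y' = n")
    case True
    have "mmult n (adj (lastgate n amp)) (lastgate n amp) y y'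
        = (\<Sum>p\<in>bits (n-1). \<Sum>b\<in>UNIV. cnj (lastgate n amp (p@[b]) y) * lastgate n amp (p@[b]) y')"
      unfolding mmult_def adj_def using n by (simp add: sum_bits_snoc)
    also have "\<dots> = (\<Sum>p\<in>bits (n-1). if p = butlast y \<and> p = butlast y' then
                        (\<Sum>b\<in>UNIV. cnj (amp y b) * amp y' b) else 0)"
      using True n by (intro sum.cong refl) (auto simp: lastgate_def intro!: sum.neutral)
    also have "\<dots> = idop n y y'"
    proof (cases "butlast y = butlast y'")
      case True2: True
      have "(\<Sum>p\<in>bits (n-1). if p = butlast y \<and> p = butlast y' then
                        (\<Sum>b\<in>UNIV. cnj (amp y b) * amp y' b) else 0)
            = (\<Sum>b\<in>UNIV. cnj (amp y b) * amp y' b)"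
        using True2 True by (simp add: sum.delta)
      then show ?thesis using c True True2 by (simp add: idop_def)
    next
      case False
      have "(\<Sum>p\<in>bits (n-1). if p = butlast y \<and> p = butlast y' then
                        (\<Sum>b\<in>UNIV. cnj (amp y b) * amp y' b) else 0) = 0"
        by (rule sum.neutral) (use False in auto)
      then show ?thesis using True False by (auto simp: idop_def)
    qed
    finally show ?thesis .
  next
    case False then show ?thesis by (auto simp: mmult_def adj_def lastgate_def idop_def)
  qed
qed

lemma perm_unit:
  assumes n: "1 \<le> n"
    and H: "\<And>y y'. length y = n \<Longrightarrow> length y' = n \<Longrightarrow> butlast y = butlast y' \<Longrightarrow> H y = H y'"
  shows "mmult n (adj (lastgate n (\<lambda>y b. if b = (H y \<noteq> last y) then 1 else 0)))
                 (lastgate n (\<lambda>y b. if b = (H y \<noteq> last y) then 1 else 0)) = idop n"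
proof (rule lastgate_unit[OF n])
  fix y y' :: "bool list"
  assume a: "length y = n" "length y' = n" "butlast y = butlast y'"
  hence "H y = H y'" by (rule H)
  moreover have "(y = y') = (last y = last y')" using a n by (intro butlast_eq_last_eq) auto
  ultimately show "(\<Sum>b\<in>UNIV. cnj (if b = (H y \<noteq> last y) then 1 else 0) * (if b = (H y' \<noteq> last y') then 1 else 0))
      = (if y = y' then 1 else (0::complex))"
    by (auto simp: UNIV_bool)
qed

lemma sq2: "complex_of_real (1 / sqrt 2) * complex_of_real (1 / sqrt 2) = 1/2"
proof -
  have "(1 / sqrt 2) * (1 / sqrt 2) = (1/2::real)" by (simp add: field_simps)
  hence "complex_of_real ((1 / sqrt 2) * (1 / sqrt 2)) = 1/2" by simp
  thus ?thesis by (simp only: of_real_mult)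
qed


lemma nth_butlast_eq: "butlast y = butlast y' \<Longrightarrow> i < length y - 1 \<Longrightarrow> y!i = y'!i"
proof -
  assume a: "butlast y = butlast y'" "i < length y - 1"
  have i1: "i < length (butlast y)" using a(2) by simp
  have "length (butlast y') = length (butlast y)" using a(1) by simp
  hence i2: "i < length (butlast y')" using i1 by linarith
  have "y!i = butlast y ! i" using i1 by (simp add: nth_butlast)
  moreover have "y'!i = butlast y' ! i" using i2 by (simp add: nth_butlast)
  ultimately show ?thesis using a(1) by simp
qed

lemma sum_UNIV_bool: "(\<Sum>b\<in>UNIV. f b) = f False + f True"
  by (simp add: UNIV_bool)

lemma lastgate_unit2:
  assumes n: "1 \<le> n"
    and M: "\<And>c c'. (\<Sum>b\<in>UNIV. cnj (M c b) * M c' b) = (if c = c' then 1 else 0)"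
  shows "mmult n (adj (lastgate n (\<lambda>y b. M (last y) b))) (lastgate n (\<lambda>y b. M (last y) b)) = idop n"
proof (rule lastgate_unit[OF n])
  fix y y' :: "bool list"
  assume a: "length y = n" "length y' = n" "butlast y = butlast y'"
  have "(y = y') = (last y = last y')" using a n by (intro butlast_eq_last_eq) auto
  then show "(\<Sum>b\<in>UNIV. cnj (M (last y) b) * M (last y') b) = (if y = y' then 1 else 0)"
    using M by simp
qed

lemma sqrtI_unit:
  assumes n: "1 \<le> n"
  shows "mmult n (adj (SqrtIg n)) (SqrtIg n) = idop n"
  unfolding SqrtIg_def
proof (rule lastgate_unit2[OF n, where M = "\<lambda>c b. if b = c then (if c then - complex_of_real (1 / sqrt 2) else complex_of_real (1 / sqrt 2)) else complex_of_real (1 / sqrt 2)"])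
  fix c c' :: bool
  show "(\<Sum>b\<in>UNIV. cnj (if b = c then (if c then - complex_of_real (1 / sqrt 2) else complex_of_real (1 / sqrt 2)) else complex_of_real (1 / sqrt 2)) *
          (if b = c' then (if c' then - complex_of_real (1 / sqrt 2) else complex_of_real (1 / sqrt 2)) else complex_of_real (1 / sqrt 2)))
        = (if c = c' then 1 else 0)"
    unfolding sum_UNIV_bool
    apply (cases c; cases c')
    apply (simp_all only: if_True if_False simp_thms complex_cnj_complex_of_real complex_cnj_minus
          minus_mult_minus mult_minus_right mult_minus_left sq2 add.right_inverse add.left_inverse)
    apply simp_all
    done
qed

lemma sqrtNOT_unit:
  assumes n: "1 \<le> n"
  shows "mmult n (adj (SqrtNOTg n)) (SqrtNOTg n) = idop n"
  unfolding SqrtNOTg_def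
proof (rule lastgate_unit2[OF n, where M = "\<lambda>c b. if b = c then (1 - \<i>) / 2 else (1 + \<i>) / 2"])
  fix c c' :: bool
  have e1: "cnj ((1 - \<i>) / 2) * ((1 - \<i>) / 2) + cnj ((1 + \<i>) / 2) * ((1 + \<i>) / 2) = 1"
    by (simp add: complex_eq_iff)
  have e2: "cnj ((1 - \<i>) / 2) * ((1 + \<i>) / 2) + cnj ((1 + \<i>) / 2) * ((1 - \<i>) / 2) = 0"
    by (simp add: complex_eq_iff)
  have e3: "cnj ((1 + \<i>) / 2) * ((1 + \<i>) / 2) + cnj ((1 - \<i>) / 2) * ((1 - \<i>) / 2) = 1"
    using e1 by (simp only: add.commute)
  have e4: "cnj ((1 + \<i>) / 2) * ((1 - \<i>) / 2) + cnj ((1 - \<i>) / 2) * ((1 + \<i>) / 2) = 0"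
    using e2 by (simp only: add.commute)
  show "(\<Sum>b\<in>UNIV. cnj (if b = c then (1 - \<i>) / 2 else (1 + \<i>) / 2) *
          (if b = c' then (1 - \<i>) / 2 else (1 + \<i>) / 2)) = (if c = c' then 1 else 0)"
    unfolding sum_UNIV_bool
    by (cases c; cases c') (simp_all only: if_True if_False simp_thms e1 e2 e3 e4)
qed



lemma mmult_cancel: "mmult n A B = idop n \<Longrightarrow> supp n C \<Longrightarrow> mmult n A (mmult n B C) = C"
  by (simp add: mmult_assoc[symmetric] idop_mmult)

lemma gateT_unit:
  assumes T: "unitary1 T" and G: "mmult n (adj G) G = idop n" "supp n G"
  shows "mmult n (adj (gateT T n G)) (gateT T n G) = idop n"
proof -
  have "mmult n (adj (gateT T n G)) (gateT T n G)
      = mmult n (tpow n T) (mmult n (adj G) (mmult n (adj (tpow n T)) (mmult n (tpow n T) (mmult n G (adj (tpow n T))))))"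
    by (simp add: gateT_def adj_mmult mmult_assoc)
  also have "\<dots> = mmult n (tpow n T) (mmult n (adj G) (mmult n G (adj (tpow n T))))"
    using G by (simp add: mmult_cancel tpow_unit1[OF T])
  also have "\<dots> = mmult n (tpow n T) (adj (tpow n T))"
    using G by (simp add: mmult_cancel)
  also have "\<dots> = idop n" by (rule tpow_unit2[OF T])
  finally show ?thesis .
qed

lemma At_pos: "1 \<le> At a"
  by (induction a) auto

lemma adj_idop: "adj (idop n) = idop n" by (auto simp: adj_def idop_def intro!: ext)

lemma nodegate_unit:
  assumes T: "unitary1 T"
  shows "mmult (At a) (adj (nodegate T a)) (nodegate T a) = idop (At a) \<and> supp (At a) (nodegate T a)"
proof (cases a)
  case (Neg b)
  have "mmult (At b) (adj (NOTg (At b))) (NOTg (At b)) = idop (At b)"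
    unfolding NOTg_def using perm_unit[of "At b" "\<lambda>_. True"] At_pos[of b] by simp
  then show ?thesis using Neg gateT_unit[OF T] by (simp add: NOTg_def)
next
  case (SqId b)
  then show ?thesis using gateT_unit[OF T] sqrtI_unit At_pos[of b] by (simp add: SqrtIg_def)
next
  case (SqNeg b)
  then show ?thesis using gateT_unit[OF T] sqrtNOT_unit At_pos[of b] by (simp add: SqrtNOTg_def)
next
  case (Xr b c)
  have pb: "1 \<le> At b" "1 \<le> At c" by (rule At_pos)+
  have "mmult (At b + At c) (adj (XORg (At b) (At c))) (XORg (At b) (At c)) = idop (At b + At c)"
    unfolding XORg_def
    apply (rule perm_unit)
    using pb apply simp
    subgoal for y y' using pb by (simp add: nth_butlast_eq[of y y'])
    done
  then show ?thesis using Xr gateT_unit[OF T] by (simp add: XORg_def)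
next
  case (Tf b c d)
  have pb: "1 \<le> At b" "1 \<le> At c" "1 \<le> At d" by (rule At_pos)+
  have "mmult (At b + At c + At d) (adj (Toffg (At b) (At c) (At d))) (Toffg (At b) (At c) (At d)) = idop (At b + At c + At d)"
    unfolding Toffg_def
    apply (rule perm_unit)
    using pb apply simp
    subgoal for y y' using pb by (simp add: nth_butlast_eq[of y y'])
    done
  then show ?thesis using Tf gateT_unit[OF T] by (simp add: Toffg_def)
qed (auto simp: adj_idop idop_mmult)



definition redr :: "nat \<Rightarrow> nat \<Rightarrow> nat \<Rightarrow> qop \<Rightarrow> qop" where
  "redr a k c \<rho> = (\<lambda>x y. if length x = k \<and> length y = k
      then \<Sum>u\<in>bits a. \<Sum>w\<in>bits c. \<rho> (u@x@w) (u@y@w) else 0)"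

lemma red_redr: "red ns j \<rho> = redr (sum_list (take j ns)) (ns!j) (sum_list (drop (Suc j) ns)) \<rho>"
  by (simp add: red_def redr_def Let_def)

lemma supp_redr[simp]: "supp k (redr a k c \<rho>)"
  by (simp add: supp_def redr_def)

lemma redr_comp: "redr b k c (redr a (b+k+c) d \<rho>) = redr (a+b) k (c+d) \<rho>"
proof (rule ext, rule ext)
  fix x y
  show "redr b k c (redr a (b+k+c) d \<rho>) x y = redr (a+b) k (c+d) \<rho> x y"
  proof (cases "length x = k \<and> length y = k")
    case True
    have "redr b k c (redr a (b+k+c) d \<rho>) x y =
       (\<Sum>u'\<in>bits b. \<Sum>w'\<in>bits c. \<Sum>u\<in>bits a. \<Sum>w\<in>bits d. \<rho> (u@u'@x@w'@w) (u@u'@y@w'@w))"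
      using True by (simp add: redr_def)
    also have "\<dots> = (\<Sum>u\<in>bits a. \<Sum>u'\<in>bits b. \<Sum>w'\<in>bits c. \<Sum>w\<in>bits d. \<rho> (u@u'@x@w'@w) (u@u'@y@w'@w))"
      by (rule trans[OF sum.cong[OF refl sum.swap] sum.swap])
    also have "\<dots> = redr (a+b) k (c+d) \<rho> x y"
      using True by (simp add: redr_def sum_bits_append)
    finally show ?thesis .
  qed (auto simp: redr_def)
qed

lemma tensor_app: "length u = n \<Longrightarrow> length p = n \<Longrightarrow> length x = m \<Longrightarrow> length q = m \<Longrightarrow>
   tensor n A m B (u@x) (p@q) = A u p * B x q"
  by (simp add: tensor_def)

lemma applyD_expand: "applyD n G \<rho> x y = (\<Sum>q\<in>bits n. \<Sum>p\<in>bits n. G x p * \<rho> p q * cnj (G y q))"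
  by (simp add: applyD_def mmult_def adj_def sum_distrib_right)

lemma unitD: "mmult a (adj A) A = idop a \<Longrightarrow> length q = a \<Longrightarrow> length p = a \<Longrightarrow>
    (\<Sum>u\<in>bits a. cnj (A u q) * A u p) = (if q = p then 1 else 0)"
  by (drule fun_cong[of _ _ q], drule fun_cong[of _ _ p]) (simp add: mmult_def adj_def idop_def)

lemma if_mult_1: "(if P then 1 else 0) * (Y::complex) = (if P then Y else 0)" by simp

lemma PT_L:
  assumes A: "mmult a (adj A) A = idop a" and B: "supp n B"
  shows "redr a n 0 (applyD (a+n) (tensor a A n B) \<rho>) = applyD n B (redr a n 0 \<rho>)"
proof (rule ext, rule ext)
  fix x y
  show "redr a n 0 (applyD (a+n) (tensor a A n B) \<rho>) x y = applyD n B (redr a n 0 \<rho>) x y"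
  proof (cases "length x = n \<and> length y = n")
    case True
    have "redr a n 0 (applyD (a+n) (tensor a A n B) \<rho>) x y
       = (\<Sum>u\<in>bits a. \<Sum>q1\<in>bits a. \<Sum>q2\<in>bits n. \<Sum>p1\<in>bits a. \<Sum>p2\<in>bits n.
             A u p1 * B x p2 * \<rho> (p1@p2) (q1@q2) * cnj (A u q1) * cnj (B y q2))"
      using True by (simp add: redr_def applyD_expand sum_bits_append tensor_app mult.assoc)
    also have "\<dots> = (\<Sum>q1\<in>bits a. \<Sum>q2\<in>bits n. \<Sum>p1\<in>bits a. \<Sum>p2\<in>bits n. \<Sum>u\<in>bits a.
             (cnj (A u q1) * A u p1) * (B x p2 * \<rho> (p1@p2) (q1@q2) * cnj (B y q2)))"
      apply (rule sum.swap[THEN trans])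
      apply (rule sum.cong[OF refl])
      apply (rule sum.swap[THEN trans])
      apply (rule sum.cong[OF refl])
      apply (rule sum.swap[THEN trans])
      apply (rule sum.cong[OF refl])
      apply (rule sum.swap[THEN trans])
      apply (rule sum.cong[OF refl])
      apply (rule sum.cong[OF refl])
      apply (simp add: ac_simps)
      done
    also have "\<dots> = (\<Sum>q1\<in>bits a. \<Sum>q2\<in>bits n. \<Sum>p1\<in>bits a. \<Sum>p2\<in>bits n.
             (if q1 = p1 then 1 else 0) * (B x p2 * \<rho> (p1@p2) (q1@q2) * cnj (B y q2)))"
      by (simp add: sum_distrib_right[symmetric] unitD[OF A])
    also have "\<dots> = (\<Sum>q1\<in>bits a. \<Sum>q2\<in>bits n. \<Sum>p2\<in>bits n.
             (B x p2 * \<rho> (q1@p2) (q1@q2) * cnj (B y q2)))"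
      apply (rule sum.cong[OF refl])
      apply (rule sum.cong[OF refl])
      apply (rule trans[OF sum.swap])
      apply (rule sum.cong[OF refl])
      apply (simp add: if_mult_1 sum.delta)
      done
    also have "\<dots> = (\<Sum>q2\<in>bits n. \<Sum>p2\<in>bits n. \<Sum>q1\<in>bits a.
             (B x p2 * \<rho> (q1@p2) (q1@q2) * cnj (B y q2)))"
      by (rule trans[OF sum.swap sum.cong[OF refl sum.swap]])
    also have "\<dots> = applyD n B (redr a n 0 \<rho>) x y"
      using True by (simp add: redr_def applyD_expand sum_distrib_left sum_distrib_right)
    finally show ?thesis .
  qed (use B in \<open>auto simp: redr_def applyD_def mmult_def adj_def supp_def\<close>)
qed

lemma PT_R:
  assumes C: "mmult c (adj C) C = idop c" and G: "supp k G"
  shows "redr 0 k c (applyD (k+c) (tensor k G c C) \<sigma>) = applyD k G (redr 0 k c \<sigma>)"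
proof (rule ext, rule ext)
  fix x y
  show "redr 0 k c (applyD (k+c) (tensor k G c C) \<sigma>) x y = applyD k G (redr 0 k c \<sigma>) x y"
  proof (cases "length x = k \<and> length y = k")
    case True
    have "redr 0 k c (applyD (k+c) (tensor k G c C) \<sigma>) x y
       = (\<Sum>w\<in>bits c. \<Sum>q1\<in>bits k. \<Sum>q2\<in>bits c. \<Sum>p1\<in>bits k. \<Sum>p2\<in>bits c.
             G x p1 * C w p2 * \<sigma> (p1@p2) (q1@q2) * cnj (G y q1) * cnj (C w q2))"
      using True by (simp add: redr_def applyD_expand sum_bits_append tensor_app mult.assoc)
    also have "\<dots> = (\<Sum>q1\<in>bits k. \<Sum>q2\<in>bits c. \<Sum>p1\<in>bits k. \<Sum>p2\<in>bits c. \<Sum>w\<in>bits c.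
             (cnj (C w q2) * C w p2) * (G x p1 * \<sigma> (p1@p2) (q1@q2) * cnj (G y q1)))"
      apply (rule sum.swap[THEN trans])
      apply (rule sum.cong[OF refl])
      apply (rule sum.swap[THEN trans])
      apply (rule sum.cong[OF refl])
      apply (rule sum.swap[THEN trans])
      apply (rule sum.cong[OF refl])
      apply (rule sum.swap[THEN trans])
      apply (rule sum.cong[OF refl])
      apply (rule sum.cong[OF refl])
      apply (simp add: ac_simps)
      done
    also have "\<dots> = (\<Sum>q1\<in>bits k. \<Sum>q2\<in>bits c. \<Sum>p1\<in>bits k. \<Sum>p2\<in>bits c.
             (if q2 = p2 then 1 else 0) * (G x p1 * \<sigma> (p1@p2) (q1@q2) * cnj (G y q1)))"
      by (simp add: sum_distrib_right[symmetric] unitD[OF C])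
    also have "\<dots> = (\<Sum>q1\<in>bits k. \<Sum>q2\<in>bits c. \<Sum>p1\<in>bits k.
             (G x p1 * \<sigma> (p1@q2) (q1@q2) * cnj (G y q1)))"
      apply (rule sum.cong[OF refl])
      apply (rule sum.cong[OF refl])
      apply (rule sum.cong[OF refl])
      apply (simp add: if_mult_1 sum.delta)
      done
    also have "\<dots> = (\<Sum>q1\<in>bits k. \<Sum>p1\<in>bits k. \<Sum>q2\<in>bits c.
             (G x p1 * \<sigma> (p1@q2) (q1@q2) * cnj (G y q1)))"
      by (rule sum.cong[OF refl sum.swap])
    also have "\<dots> = applyD k G (redr 0 k c \<sigma>) x y"
      using True by (simp add: redr_def applyD_expand sum_distrib_left sum_distrib_right)
    finally show ?thesis .
  qed (use G in \<open>auto simp: redr_def applyD_def mmult_def adj_def supp_def\<close>)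
qed



lemma tensor_mmult: "mmult (n+m) (tensor n A m B) (tensor n C m D) = tensor n (mmult n A C) m (mmult m B D)"
proof (rule ext, rule ext)
  fix x y
  show "mmult (n+m) (tensor n A m B) (tensor n C m D) x y = tensor n (mmult n A C) m (mmult m B D) x y"
  proof (cases "length x = n + m \<and> length y = n + m")
    case True
    have "mmult (n+m) (tensor n A m B) (tensor n C m D) x y
        = (\<Sum>z1\<in>bits n. \<Sum>z2\<in>bits m. (A (take n x) z1 * C z1 (take n y)) * (B (drop n x) z2 * D z2 (drop n y)))"
      using True by (simp add: mmult_def sum_bits_append tensor_def mult_ac)
    also have "\<dots> = tensor n (mmult n A C) m (mmult m B D) x y"
      using True by (simp add: tensor_def mmult_def sum_product)
    finally show ?thesis .
  qed (auto simp: mmult_def tensor_def)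
qed

lemma adj_tensor: "adj (tensor n A m B) = tensor n (adj A) m (adj B)"
  by (auto simp: adj_def tensor_def intro!: ext)

lemma tensor_idop: "tensor n (idop n) m (idop m) = idop (n+m)"
proof (rule ext, rule ext)
  fix x y
  show "tensor n (idop n) m (idop m) x y = idop (n+m) x y"
  proof (cases "length x = n + m \<and> length y = n + m")
    case True
    have "(take n x = take n y \<and> drop n x = drop n y) = (x = y)"
      by (metis append_take_drop_id)
    then show ?thesis using True by (auto simp: tensor_def idop_def)
  qed (auto simp: tensor_def idop_def)
qed

definition unitop :: "nat \<Rightarrow> qop \<Rightarrow> bool" where
  "unitop n A \<longleftrightarrow> mmult n (adj A) A = idop n \<and> supp n A"

lemma unitop_tensor: "unitop n A \<Longrightarrow> unitop m B \<Longrightarrow> unitop (n+m) (tensor n A m B)"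
  by (simp add: unitop_def adj_tensor tensor_mmult tensor_idop)

lemma unitop_idop: "unitop n (idop n)"
  by (simp add: unitop_def adj_idop idop_mmult)

lemma unitop_tensor_list: "(\<forall>p\<in>set L. unitop (fst p) (snd p)) \<Longrightarrow> unitop (sum_list (map fst L)) (tensor_list L)"
proof (induction L)
  case Nil then show ?case by (simp add: unitop_idop)
next
  case (Cons p L)
  obtain d A where p: "p = (d, A)" by (cases p)
  show ?case using Cons p by (simp add: unitop_tensor)
qed

lemma supp_tensor_list: "supp (sum_list (map fst L)) (tensor_list L)"
proof (induction L)
  case Nil then show ?case by simp
next
  case (Cons p L)
  obtain d A where p: "p = (d, A)" by (cases p)
  show ?case using p by simp
qed

lemma PT_list:
  assumes "\<forall>p\<in>set pre. unitop (fst p) (snd p)" "\<forall>p\<in>set post. unitop (fst p) (snd p)" "supp k G"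
  shows "redr (sum_list (map fst pre)) k (sum_list (map fst post))
           (applyD (sum_list (map fst (pre @ (k,G) # post))) (tensor_list (pre @ (k,G) # post)) \<rho>)
         = applyD k G (redr (sum_list (map fst pre)) k (sum_list (map fst post)) \<rho>)"
  using assms(1)
proof (induction pre arbitrary: \<rho>)
  case Nil
  have "unitop (sum_list (map fst post)) (tensor_list post)"
    using assms(2) by (rule unitop_tensor_list)
  then show ?case using assms(3) by (simp add: PT_R unitop_def)
next
  case (Cons p pre)
  obtain d A where p: "p = (d, A)" by (cases p)
  let ?b = "sum_list (map fst pre)" and ?c = "sum_list (map fst post)"
  let ?B = "tensor_list (pre @ (k,G) # post)"
  have uA: "unitop d A" using Cons.prems p by simp
  have uB: "supp (?b + k + ?c) ?B"
    using supp_tensor_list[of "pre @ (k,G) # post"] by (simp add: add.assoc)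
  have "redr (d + ?b) k ?c (applyD (d + (?b + k + ?c)) (tensor d A (?b + k + ?c) ?B) \<rho>)
      = redr ?b k ?c (redr d (?b + k + ?c) 0 (applyD (d + (?b + k + ?c)) (tensor d A (?b + k + ?c) ?B) \<rho>))"
    using redr_comp[of ?b k ?c d 0] by simp
  also have "\<dots> = redr ?b k ?c (applyD (?b + k + ?c) ?B (redr d (?b + k + ?c) 0 \<rho>))"
    using uA uB by (simp add: PT_L unitop_def)
  also have "\<dots> = applyD k G (redr ?b k ?c (redr d (?b + k + ?c) 0 \<rho>))"
    using Cons.IH[of "redr d (?b + k + ?c) 0 \<rho>"] Cons.prems by (simp add: add.assoc)
  also have "\<dots> = applyD k G (redr (d + ?b) k ?c \<rho>)"
    using redr_comp[of ?b k ?c d 0] by simp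
  finally show ?case using p by (simp add: add.assoc)
qed



lemma prod_lessThan_add: fixes m :: nat shows "(\<Prod>i<n+m. f i) = (\<Prod>i<n. f i) * (\<Prod>i<m. (f (n+i)::complex))"
  by (induction m) (simp_all add: mult.assoc)

lemma tpow_tensor: "tpow (n+m) T = tensor n (tpow n T) m (tpow m T)"
proof (rule ext, rule ext)
  fix x y
  show "tpow (n+m) T x y = tensor n (tpow n T) m (tpow m T) x y"
  proof (cases "length x = n + m \<and> length y = n + m")
    case True
    then show ?thesis by (simp add: tpow_def tensor_def prod_lessThan_add nth_drop)
  qed (auto simp: tpow_def tensor_def)
qed

lemma applyD_applyD: "applyD n X (applyD n Y \<sigma>) = applyD n (mmult n X Y) \<sigma>"
  by (simp add: applyD_def adj_mmult mmult_assoc)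

definition dT :: "(bool \<Rightarrow> bool \<Rightarrow> complex) \<Rightarrow> nat \<Rightarrow> qop \<Rightarrow> bool list \<Rightarrow> complex" where
  "dT T n \<rho> z = applyD n (adj (tpow n T)) \<rho> z z"

lemma dT_expand: "dT T n \<rho> z = (\<Sum>q\<in>bits n. \<Sum>p\<in>bits n. cnj (tpow n T p z) * \<rho> p q * tpow n T q z)"
  by (simp add: dT_def applyD_expand adj_def)

lemma unitop_adj_tpow: "unitary1 T \<Longrightarrow> unitop n (adj (tpow n T))"
  by (simp add: unitop_def tpow_unit2)

lemma tensor_0: "supp c Z \<Longrightarrow> tensor c Z 0 (idop 0) = Z"
  by (auto simp: tensor_def idop_def supp_def intro!: ext)

lemma dT_redr:
  assumes T: "unitary1 T" and y: "length y = k"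
  shows "dT T k (redr a k c \<rho>) y = (\<Sum>u\<in>bits a. \<Sum>w\<in>bits c. dT T (a+k+c) \<rho> (u@y@w))"
proof -
  have e: "adj (tpow (a+(k+c)) T) = tensor a (adj (tpow a T)) (k+c) (tensor k (adj (tpow k T)) c (adj (tpow c T)))"
    by (simp add: tpow_tensor adj_tensor)
  have "redr a k c (applyD (a+k+c) (adj (tpow (a+k+c) T)) \<rho>)
      = redr 0 k c (redr a (k+c) 0 (applyD (a+(k+c)) (adj (tpow (a+(k+c)) T)) \<rho>))"
    using redr_comp[of 0 k c a 0] by (simp add: add.assoc)
  also have "\<dots> = redr 0 k c (applyD (k+c) (tensor k (adj (tpow k T)) c (adj (tpow c T))) (redr a (k+c) 0 \<rho>))"
    unfolding e using unitop_adj_tpow[OF T, of a] unitop_adj_tpow[OF T, of "k+c"]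
    by (subst PT_L) (simp_all add: unitop_def tpow_tensor adj_tensor)
  also have "\<dots> = applyD k (adj (tpow k T)) (redr 0 k c (redr a (k+c) 0 \<rho>))"
    using unitop_adj_tpow[OF T, of c] by (subst PT_R) (simp_all add: unitop_def)
  also have "\<dots> = applyD k (adj (tpow k T)) (redr a k c \<rho>)"
    using redr_comp[of 0 k c a 0] by simp
  finally have "redr a k c (applyD (a+k+c) (adj (tpow (a+k+c) T)) \<rho>) y y = applyD k (adj (tpow k T)) (redr a k c \<rho>) y y"
    by simp
  then show ?thesis using y by (simp add: dT_def redr_def)
qed

lemma qtrace_comm: "qtrace n (mmult n A B) = qtrace n (mmult n B A)"
  unfolding qtrace_def mmult_def by (rule trans[OF sum.swap]) (simp add: mult.commute)

lemma sum_dT: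
  assumes T: "unitary1 T" and s: "supp n \<rho>"
  shows "(\<Sum>z\<in>bits n. dT T n \<rho> z) = qtrace n \<rho>"
proof -
  have "(\<Sum>z\<in>bits n. dT T n \<rho> z) = qtrace n (mmult n (mmult n (adj (tpow n T)) \<rho>) (tpow n T))"
    by (simp add: dT_def qtrace_def applyD_def)
  also have "\<dots> = qtrace n (mmult n (tpow n T) (mmult n (adj (tpow n T)) \<rho>))"
    by (rule qtrace_comm)
  also have "\<dots> = qtrace n \<rho>" using s by (simp add: mmult_cancel tpow_unit2[OF T])
  finally show ?thesis .
qed

lemma dT_nonneg:
  assumes "density n \<rho>"
  shows "Im (dT T n \<rho> z) = 0 \<and> 0 \<le> Re (dT T n \<rho> z)"
proof -
  have "dT T n \<rho> z = (\<Sum>x\<in>bits n. \<Sum>y\<in>bits n. cnj (tpow n T x z) * \<rho> x y * tpow n T y z)"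
    unfolding dT_expand by (rule sum.swap)
  moreover have "\<forall>v::bool list \<Rightarrow> complex.
        Im (\<Sum>x\<in>bits n. \<Sum>y\<in>bits n. cnj (v x) * \<rho> x y * v y) = 0 \<and>
        0 \<le> Re (\<Sum>x\<in>bits n. \<Sum>y\<in>bits n. cnj (v x) * \<rho> x y * v y)"
    using assms unfolding density_def by blast
  ultimately show ?thesis by (simp only:)
qed

lemma probT_dT: "probT T n \<sigma> = Re (\<Sum>z\<in>{z\<in>bits n. last z}. dT T n \<sigma> z)"
proof -
  let ?S = "{z\<in>bits n. last z}"
  have "qtrace n (mmult n (projT T n True) \<sigma>)
      = (\<Sum>x\<in>bits n. \<Sum>y\<in>bits n. \<Sum>z\<in>?S. tpow n T x z * cnj (tpow n T y z) * \<sigma> y x)"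
    by (simp add: qtrace_def mmult_def projT_def sum_distrib_right)
  also have "\<dots> = (\<Sum>x\<in>bits n. \<Sum>z\<in>?S. \<Sum>y\<in>bits n. tpow n T x z * cnj (tpow n T y z) * \<sigma> y x)"
    by (rule sum.cong[OF refl sum.swap])
  also have "\<dots> = (\<Sum>z\<in>?S. \<Sum>x\<in>bits n. \<Sum>y\<in>bits n. tpow n T x z * cnj (tpow n T y z) * \<sigma> y x)"
    by (rule sum.swap)
  also have "\<dots> = (\<Sum>z\<in>?S. dT T n \<sigma> z)"
    by (simp add: dT_expand mult_ac)
  finally show ?thesis by (simp add: probT_def)
qed



lemma finite_bits_filter[simp]: "finite {z::bool list. length z = n \<and> P z}"
  by (rule finite_subset[OF _ finite_bits[of n]]) auto

lemma dT_gate: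
  assumes T: "unitary1 T" and G: "supp n G"
  shows "dT T n (applyD n (gateT T n G) \<sigma>) z = applyD n G (applyD n (adj (tpow n T)) \<sigma>) z z"
proof -
  have "mmult n (adj (tpow n T)) (gateT T n G) = mmult n G (adj (tpow n T))"
    using G by (simp add: gateT_def mmult_assoc mmult_cancel tpow_unit1[OF T])
  then show ?thesis by (simp add: dT_def applyD_applyD)
qed

definition permf :: "(bool list \<Rightarrow> bool) \<Rightarrow> bool list \<Rightarrow> bool list" where
  "permf H z = butlast z @ [H z \<noteq> last z]"

definition Hcond :: "nat \<Rightarrow> (bool list \<Rightarrow> bool) \<Rightarrow> bool" where
  "Hcond n H \<longleftrightarrow> (\<forall>y y'. length y = n \<longrightarrow> length y' = n \<longrightarrow> butlast y = butlast y' \<longrightarrow> H y = H y')"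

lemma if_if_and: "(if A then (if B then x else y) else y) = (if A \<and> B then x else y)" by auto

lemma bool_eq_eq: "((a::bool) = (a = b)) = b" by auto

lemma permf_props:
  assumes n: "1 \<le> n" and H: "Hcond n H" and z: "length z = n"
  shows "length (permf H z) = n" "butlast (permf H z) = butlast z" "last (permf H z) = (H z \<noteq> last z)"
        "H (permf H z) = H z" "permf H (permf H z) = z"
proof -
  show l: "length (permf H z) = n" using n z by (simp add: permf_def)
  show b: "butlast (permf H z) = butlast z" by (simp add: permf_def)
  show la: "last (permf H z) = (H z \<noteq> last z)" by (simp add: permf_def)
  show h: "H (permf H z) = H z" using H l z b unfolding Hcond_def by blast
  have "z \<noteq> []" using n z by auto
  then show "permf H (permf H z) = z" using h b la
    by (simp add: permf_def bool_eq_eq)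
qed

lemma permgate_entry:
  assumes n: "1 \<le> n" and H: "Hcond n H" and z: "length z = n" and p: "length p = n"
  shows "lastgate n (\<lambda>y b. if b = (H y \<noteq> last y) then 1 else 0) z p = (if p = permf H z then 1 else 0)"
proof -
  have "(butlast z = butlast p \<and> last z = (H p \<noteq> last p)) = (p = permf H z)"
  proof
    assume a: "butlast z = butlast p \<and> last z = (H p \<noteq> last p)"
    hence "H z = H p" using H[unfolded Hcond_def, rule_format, OF z p] by simp
    hence "H p = H z" by simp
    hence "last p = (H z \<noteq> last z)" using a by auto
    moreover have "p \<noteq> []" using n p by auto
    hence "p = butlast p @ [last p]" by simp
    ultimately show "p = permf H z" using a unfolding permf_def by simp
  next
    assume "p = permf H z"
    then show "butlast z = butlast p \<and> last z = (H p \<noteq> last p)"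
      using permf_props[OF n H z] by auto
  qed
  moreover have "lastgate n (\<lambda>y b. if b = (H y \<noteq> last y) then 1 else 0) z p
     = (if butlast z = butlast p \<and> last z = (H p \<noteq> last p) then 1 else 0)"
    unfolding lastgate_def using z p by (simp only: simp_thms if_True if_False if_if_and)
  ultimately show ?thesis by (simp only:)
qed

lemma sum_delta_mult: "finite S \<Longrightarrow> (\<Sum>p\<in>S. (if p = P then 1 else 0) * g p) = (if P \<in> S then g P else (0::complex))"
  by (simp add: if_mult_1 sum.delta')

lemma sum_delta_mult': "finite S \<Longrightarrow> (\<Sum>p\<in>S. g p * cnj (if p = P then 1 else 0)) = (if P \<in> S then g P else (0::complex))"
proof -
  assume "finite S"
  have "(\<Sum>p\<in>S. g p * cnj (if p = P then 1 else 0)) = (\<Sum>p\<in>S. (if p = P then 1 else 0) * g p)"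
    by (intro sum.cong refl) simp
  then show ?thesis using sum_delta_mult[OF \<open>finite S\<close>] by simp
qed

lemma perm_apply:
  assumes n: "1 \<le> n" and H: "Hcond n H" and z: "length z = n"
  shows "applyD n (lastgate n (\<lambda>y b. if b = (H y \<noteq> last y) then 1 else 0)) X z z = X (permf H z) (permf H z)"
proof -
  have "applyD n (lastgate n (\<lambda>y b. if b = (H y \<noteq> last y) then 1 else 0)) X z z
      = (\<Sum>q\<in>bits n. \<Sum>p\<in>bits n. (if p = permf H z then 1 else 0) * X p q * cnj (if q = permf H z then 1 else 0))"
    unfolding applyD_expand using permgate_entry[OF n H z] by simp
  also have "\<dots> = (\<Sum>q\<in>bits n. X (permf H z) q * cnj (if q = permf H z then 1 else 0))"
    using permf_props(1)[OF n H z] by (intro sum.cong refl) (simp add: sum_delta_mult mult.assoc)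
  also have "\<dots> = X (permf H z) (permf H z)"
    using permf_props(1)[OF n H z] by (simp add: sum_delta_mult')
  finally show ?thesis .
qed

lemma sum_permf:
  assumes n: "1 \<le> n" and H: "Hcond n H"
  shows "(\<Sum>z\<in>{z\<in>bits n. last z}. f (permf H z)) = (\<Sum>v\<in>{v\<in>bits n. H v \<noteq> last v}. f v)"
proof (rule sum.reindex_bij_witness[of _ "permf H" "permf H"])
  fix v assume "v \<in> {v\<in>bits n. H v \<noteq> last v}"
  then show "permf H (permf H v) = v" "permf H v \<in> {z\<in>bits n. last z}"
    using permf_props[OF n H] by auto
next
  fix z assume "z \<in> {z\<in>bits n. last z}"
  then show "permf H (permf H z) = z" "permf H z \<in> {v\<in>bits n. H v \<noteq> last v}"
    using permf_props[OF n H] by auto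
qed simp

lemma prob_gate:
  assumes T: "unitary1 T" and n: "1 \<le> n" and H: "Hcond n H"
  shows "probT T n (applyD n (gateT T n (lastgate n (\<lambda>y b. if b = (H y \<noteq> last y) then 1 else 0))) \<sigma>)
       = Re (\<Sum>v\<in>{v\<in>bits n. H v \<noteq> last v}. dT T n \<sigma> v)"
proof -
  have "(\<Sum>z\<in>{z\<in>bits n. last z}. dT T n (applyD n (gateT T n (lastgate n (\<lambda>y b. if b = (H y \<noteq> last y) then 1 else 0))) \<sigma>) z)
     = (\<Sum>z\<in>{z\<in>bits n. last z}. dT T n \<sigma> (permf H z))"
  proof (rule sum.cong[OF refl])
    fix z assume "z \<in> {z\<in>bits n. last z}"
    hence z: "length z = n" by simp
    have "dT T n (applyD n (gateT T n (lastgate n (\<lambda>y b. if b = (H y \<noteq> last y) then 1 else 0))) \<sigma>) z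
        = applyD n (lastgate n (\<lambda>y b. if b = (H y \<noteq> last y) then 1 else 0)) (applyD n (adj (tpow n T)) \<sigma>) z z"
      by (rule dT_gate[OF T supp_lastgate])
    also have "\<dots> = applyD n (adj (tpow n T)) \<sigma> (permf H z) (permf H z)"
      by (rule perm_apply[OF n H z])
    finally show "dT T n (applyD n (gateT T n (lastgate n (\<lambda>y b. if b = (H y \<noteq> last y) then 1 else 0))) \<sigma>) z
        = dT T n \<sigma> (permf H z)" by (simp only: dT_def)
  qed
  also have "\<dots> = (\<Sum>v\<in>{v\<in>bits n. H v \<noteq> last v}. dT T n \<sigma> v)"
    by (rule sum_permf[OF n H])
  finally show ?thesis by (simp add: probT_dT)
qed

lemma unitD2: "unitary1 T \<Longrightarrow> length z = n \<Longrightarrow> length z' = n \<Longrightarrow>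
    (\<Sum>p\<in>bits n. cnj (tpow n T p z) * tpow n T p z') = (if z = z' then 1 else 0)"
proof -
  assume T: "unitary1 T" and l: "length z = n" "length z' = n"
  have "mmult n (adj (tpow n T)) (tpow n T) z z' = idop n z z'" using tpow_unit1[OF T] by simp
  then show ?thesis using l by (simp add: mmult_def adj_def idop_def)
qed

lemma dT_projT:
  assumes T: "unitary1 T" and z: "length z = n"
  shows "dT T n (projT T n b) z = (if last z = b then 1 else 0)"
proof -
  let ?S = "{z'\<in>bits n. last z' = b}"
  have "dT T n (projT T n b) z = (\<Sum>q\<in>bits n. \<Sum>p\<in>bits n. \<Sum>z'\<in>?S.
          (cnj (tpow n T p z) * tpow n T p z') * (cnj (tpow n T q z') * tpow n T q z))"
    by (simp add: dT_expand projT_def sum_distrib_left sum_distrib_right mult_ac)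
  also have "\<dots> = (\<Sum>z'\<in>?S. (\<Sum>p\<in>bits n. cnj (tpow n T p z) * tpow n T p z') * (\<Sum>q\<in>bits n. cnj (tpow n T q z') * tpow n T q z))"
    apply (simp add: sum_product)
    apply (rule trans[OF sum.swap])
    apply (rule trans[OF sum.cong[OF refl sum.swap]])
    apply (rule trans[OF sum.swap])
    apply (rule sum.cong[OF refl])
    apply (rule refl)
    done
  also have "\<dots> = (\<Sum>z'\<in>?S. (if z = z' then 1 else 0))"
    using z by (intro sum.cong refl) (simp add: unitD2[OF T])
  also have "\<dots> = (if last z = b then 1 else 0)"
  proof -
    have "finite ?S" by simp
    then show ?thesis using z by (simp only: sum.delta') simp
  qed
  finally show ?thesis .
qed



lemma if_sum_distrib: "(if P then (\<Sum>x\<in>A. f x) else 0) = (\<Sum>x\<in>A. if P then f x else (0::real))"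
  by simp

lemma nth_mid: "length u = a \<Longrightarrow> length y = k \<Longrightarrow> Suc 0 \<le> k \<Longrightarrow> (u@y@w)!(a+k-Suc 0) = last y"
proof -
  assume a: "length u = a" "length y = k" "Suc 0 \<le> k"
  hence "a+k-Suc 0 = length u + (k-1)" by simp
  hence "(u@y@w)!(a+k-Suc 0) = (y@w)!(k-1)" by (simp only: nth_append_length_plus)
  also have "\<dots> = y!(k-1)" using a by (simp add: nth_append)
  also have "\<dots> = last y"
  proof -
    have "y \<noteq> []" using a by auto
    then show ?thesis using a by (simp add: last_conv_nth)
  qed
  finally show ?thesis .
qed

lemma sum_filter_bits: "(\<Sum>y\<in>{y\<in>bits k. P y}. g y) = (\<Sum>y\<in>bits k. if P y then g y else 0)"
  by (rule sum.inter_filter[OF finite_bits])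

lemma prob_redr:
  assumes T: "unitary1 T" and k: "1 \<le> k" and M: "M = a+k+c"
  shows "probT T k (redr a k c \<rho>) = (\<Sum>v\<in>bits M. if v!(a+k-1) then Re (dT T M \<rho> v) else 0)"
proof -
  have "probT T k (redr a k c \<rho>) = Re (\<Sum>y\<in>{y\<in>bits k. last y}. dT T k (redr a k c \<rho>) y)"
    by (rule probT_dT)
  also have "\<dots> = Re (\<Sum>y\<in>bits k. if last y then dT T k (redr a k c \<rho>) y else 0)"
    by (simp only: sum_filter_bits)
  also have "\<dots> = (\<Sum>y\<in>bits k. if last y then (\<Sum>u\<in>bits a. \<Sum>w\<in>bits c. Re (dT T M \<rho> (u@y@w))) else 0)"
    by (simp add: dT_redr[OF T] M Re_sum if_distrib[of Re] cong: if_cong)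
  also have "\<dots> = (\<Sum>y\<in>bits k. \<Sum>u\<in>bits a. \<Sum>w\<in>bits c. if last y then Re (dT T M \<rho> (u@y@w)) else 0)"
    by (simp only: if_sum_distrib)
  also have "\<dots> = (\<Sum>u\<in>bits a. \<Sum>y\<in>bits k. \<Sum>w\<in>bits c. if last y then Re (dT T M \<rho> (u@y@w)) else 0)"
    by (rule sum.swap)
  also have "\<dots> = (\<Sum>u\<in>bits a. \<Sum>y\<in>bits k. \<Sum>w\<in>bits c. if (u@y@w)!(a+k-1) then Re (dT T M \<rho> (u@y@w)) else 0)"
    using k by (simp add: nth_mid)
  also have "\<dots> = (\<Sum>v\<in>bits M. if v!(a+k-1) then Re (dT T M \<rho> v) else 0)"
    unfolding M by (rule sum_bits3[symmetric])
  finally show ?thesis .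
qed

lemma prob_gate_redr:
  assumes T: "unitary1 T" and k: "1 \<le> k" and H: "Hcond k H" and M: "M = a+k+c"
  shows "probT T k (applyD k (gateT T k (lastgate k (\<lambda>y b. if b = (H y \<noteq> last y) then 1 else 0))) (redr a k c \<rho>))
     = (\<Sum>u\<in>bits a. \<Sum>y\<in>bits k. \<Sum>w\<in>bits c. if H y \<noteq> last y then Re (dT T M \<rho> (u@y@w)) else 0)"
proof -
  have "probT T k (applyD k (gateT T k (lastgate k (\<lambda>y b. if b = (H y \<noteq> last y) then 1 else 0))) (redr a k c \<rho>))
      = Re (\<Sum>y\<in>{y\<in>bits k. H y \<noteq> last y}. dT T k (redr a k c \<rho>) y)"
    by (rule prob_gate[OF T k H])
  also have "\<dots> = Re (\<Sum>y\<in>bits k. if H y \<noteq> last y then dT T k (redr a k c \<rho>) y else 0)"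
    by (simp only: sum_filter_bits)
  also have "\<dots> = (\<Sum>y\<in>bits k. if H y \<noteq> last y then (\<Sum>u\<in>bits a. \<Sum>w\<in>bits c. Re (dT T M \<rho> (u@y@w))) else 0)"
    by (simp add: dT_redr[OF T] M Re_sum if_distrib[of Re] cong: if_cong)
  also have "\<dots> = (\<Sum>y\<in>bits k. \<Sum>u\<in>bits a. \<Sum>w\<in>bits c. if H y \<noteq> last y then Re (dT T M \<rho> (u@y@w)) else 0)"
    by (simp only: if_sum_distrib)
  also have "\<dots> = (\<Sum>u\<in>bits a. \<Sum>y\<in>bits k. \<Sum>w\<in>bits c. if H y \<noteq> last y then Re (dT T M \<rho> (u@y@w)) else 0)"
    by (rule sum.swap)
  finally show ?thesis .
qed

lemma weights:
  assumes T: "unitary1 T" and d: "density M \<rho>"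
  shows "(\<Sum>v\<in>bits M. Re (dT T M \<rho> v)) = 1" "\<And>v. 0 \<le> Re (dT T M \<rho> v)"
proof -
  have s: "supp M \<rho>" using d by (simp add: density_def supp_def)
  have "(\<Sum>v\<in>bits M. dT T M \<rho> v) = 1" using d sum_dT[OF T s] by (simp add: density_def)
  then show "(\<Sum>v\<in>bits M. Re (dT T M \<rho> v)) = 1" by (metis Re_sum one_complex.sel)
  show "\<And>v. 0 \<le> Re (dT T M \<rho> v)" using dT_nonneg[OF d] by blast
qed

lemma prob_bounds:
  assumes T: "unitary1 T" and d: "density M \<rho>" and k: "1 \<le> k" and M: "M = a+k+c"
  shows "0 \<le> probT T k (redr a k c \<rho>) \<and> probT T k (redr a k c \<rho>) \<le> 1"
proof -
  note w = weights[OF T d]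
  have "0 \<le> (\<Sum>v\<in>bits M. if v!(a+k-1) then Re (dT T M \<rho> v) else 0)"
    using w by (intro sum_nonneg) auto
  moreover have "(\<Sum>v\<in>bits M. if v!(a+k-1) then Re (dT T M \<rho> v) else 0) \<le> (\<Sum>v\<in>bits M. Re (dT T M \<rho> v))"
    using w by (intro sum_mono) auto
  ultimately show ?thesis using w(1) prob_redr[OF T k M] by simp
qed

lemma prob_not:
  assumes T: "unitary1 T" and d: "density M \<rho>" and k: "1 \<le> k" and M: "M = a+k+c"
  shows "probT T k (applyD k (gateT T k (NOTg k)) (redr a k c \<rho>)) = 1 - probT T k (redr a k c \<rho>)"
proof -
  have H: "Hcond k (\<lambda>_. True)" by (simp add: Hcond_def)
  have e: "NOTg k = lastgate k (\<lambda>y b. if b = ((\<lambda>_. True) y \<noteq> last y) then 1 else 0)"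
    by (simp add: NOTg_def)
  let ?W = "\<lambda>v. Re (dT T M \<rho> v)"
  have "probT T k (applyD k (gateT T k (NOTg k)) (redr a k c \<rho>))
      = (\<Sum>u\<in>bits a. \<Sum>y\<in>bits k. \<Sum>w\<in>bits c. if \<not> last y then ?W (u@y@w) else 0)"
    unfolding e using prob_gate_redr[OF T k H M, of \<rho>] by simp
  also have "\<dots> = (\<Sum>u\<in>bits a. \<Sum>y\<in>bits k. \<Sum>w\<in>bits c. if \<not> (u@y@w)!(a+k-1) then ?W (u@y@w) else 0)"
    using k by (simp add: nth_mid)
  also have "\<dots> = (\<Sum>v\<in>bits M. if \<not> v!(a+k-1) then ?W v else 0)"
    unfolding M by (rule sum_bits3[symmetric])
  finally have a: "probT T k (applyD k (gateT T k (NOTg k)) (redr a k c \<rho>)) = (\<Sum>v\<in>bits M. if \<not> v!(a+k-1) then ?W v else 0)" .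
  have b: "probT T k (redr a k c \<rho>) = (\<Sum>v\<in>bits M. if v!(a+k-1) then ?W v else 0)"
    by (rule prob_redr[OF T k M])
  have "(\<Sum>v\<in>bits M. if \<not> v!(a+k-1) then ?W v else 0) + (\<Sum>v\<in>bits M. if v!(a+k-1) then ?W v else 0)
       = (\<Sum>v\<in>bits M. ?W v)"
    by (simp add: sum.distrib[symmetric] if_distrib cong: if_cong)
  then show ?thesis using a b weights(1)[OF T d] by simp
qed



lemma nth_in: "length u = a \<Longrightarrow> i < length y \<Longrightarrow> (u@y@w)!(a+i) = y!i"
  by (simp add: nth_append)

lemma bits1_last: "{z\<in>bits 1. last z} = {[True]}"
  by (auto simp: length_Suc_conv)

lemma prob_proj:
  assumes T: "unitary1 T"
  shows "probT T 1 (projT T 1 b) = (if b then 1 else 0)"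
proof -
  have "probT T 1 (projT T 1 b) = Re (\<Sum>z\<in>{[True]}. dT T 1 (projT T 1 b) z)"
    by (simp only: probT_dT bits1_last)
  also have "\<dots> = (if b then 1 else 0)" by (simp add: dT_projT[OF T])
  finally show ?thesis .
qed

lemma Hcond_toff:
  assumes "1 \<le> ka" "1 \<le> kb"
  shows "Hcond (ka+kb+1) (\<lambda>y. y!(ka-1) \<and> y!(ka+kb-1))"
  unfolding Hcond_def
proof (intro allI impI)
  fix y y' :: "bool list" assume a: "length y = ka+kb+1" "length y' = ka+kb+1" "butlast y = butlast y'"
  have "y!(ka-1) = y'!(ka-1)" "y!(ka+kb-1) = y'!(ka+kb-1)"
    using a assms by (intro nth_butlast_eq; simp)+
  then show "(y!(ka-1) \<and> y!(ka+kb-1)) = (y'!(ka-1) \<and> y'!(ka+kb-1))" by simp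
qed

lemma prob_and:
  assumes T: "unitary1 T" and d: "density M \<rho>" and ka: "1 \<le> ka" and kb: "1 \<le> kb"
    and M: "M = a + (ka+kb+1) + c"
    and Ff: "redr a3 1 c3 \<rho> = projT T 1 False" "a3 = a+ka+kb" "M = a3 + 1 + c3"
    and A: "a1 = a" "M = a1 + ka + c1"
    and B: "a2 = a + ka" "M = a2 + kb + c2"
  shows "probT T (ka+kb+1) (applyD (ka+kb+1) (gateT T (ka+kb+1) (Toffg ka kb 1)) (redr a (ka+kb+1) c \<rho>))
           \<le> probT T ka (redr a1 ka c1 \<rho>)
       \<and> probT T (ka+kb+1) (applyD (ka+kb+1) (gateT T (ka+kb+1) (Toffg ka kb 1)) (redr a (ka+kb+1) c \<rho>))
           \<le> probT T kb (redr a2 kb c2 \<rho>)"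
proof -
  let ?N = "ka+kb+1"
  let ?W = "\<lambda>v. Re (dT T M \<rho> v)"
  let ?H = "\<lambda>y. y!(ka-1) \<and> y!(ka+kb-1)"
  note w = weights[OF T d]
  have N: "1 \<le> ?N" by simp
  have e: "Toffg ka kb 1 = lastgate ?N (\<lambda>y b. if b = (?H y \<noteq> last y) then 1 else 0)"
    by (simp add: Toffg_def)
  have G: "probT T ?N (applyD ?N (gateT T ?N (Toffg ka kb 1)) (redr a ?N c \<rho>))
     = (\<Sum>u\<in>bits a. \<Sum>y\<in>bits ?N. \<Sum>w\<in>bits c. if ?H y \<noteq> last y then ?W (u@y@w) else 0)"
    unfolding e by (rule prob_gate_redr[OF T N Hcond_toff[OF ka kb] M])
  \<comment> \<open>Ff gives vanishing weights\<close>
  have "probT T 1 (redr a3 1 c3 \<rho>) = 0" using Ff(1) prob_proj[OF T, of False] by simp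
  hence "(\<Sum>v\<in>bits M. if v!(a3+1-1) then ?W v else 0) = 0"
    using prob_redr[OF T _ Ff(3), of \<rho>] by simp
  hence z: "\<And>v. v \<in> bits M \<Longrightarrow> v!(a3+1-1) \<Longrightarrow> ?W v = 0"
    using w(2) by (subst (asm) sum_nonneg_eq_0_iff) (auto split: if_splits)
  have z2: "\<And>u y w. u \<in> bits a \<Longrightarrow> y \<in> bits ?N \<Longrightarrow> w \<in> bits c \<Longrightarrow> last y \<Longrightarrow> ?W (u@y@w) = 0"
  proof -
    fix u y w assume a: "u \<in> bits a" "y \<in> bits ?N" "w \<in> bits c" "last y"
    have "(u@y@w)!(a+(ka+kb)) = y!(ka+kb)" using a by (intro nth_in) auto
    also have "\<dots> = last y"
    proof -
      have "y \<noteq> []" using a by auto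
      then show ?thesis using a by (simp add: last_conv_nth)
    qed
    finally have "(u@y@w)!(a3+1-1) = last y" using Ff(2) by (simp add: add.assoc)
    moreover have "u@y@w \<in> bits M" using a M by simp
    ultimately show "?W (u@y@w) = 0" using z a(4) by simp
  qed
  have PA: "probT T ka (redr a1 ka c1 \<rho>)
      = (\<Sum>u\<in>bits a. \<Sum>y\<in>bits ?N. \<Sum>w\<in>bits c. if y!(ka-1) then ?W (u@y@w) else 0)"
  proof -
    have "probT T ka (redr a1 ka c1 \<rho>) = (\<Sum>v\<in>bits M. if v!(a1+ka-1) then ?W v else 0)"
      by (rule prob_redr[OF T ka A(2)])
    also have "\<dots> = (\<Sum>v\<in>bits M. if v!(a+(ka-1)) then ?W v else 0)"
      using A(1) ka by simp
    also have "\<dots> = (\<Sum>u\<in>bits a. \<Sum>y\<in>bits ?N. \<Sum>w\<in>bits c. if (u@y@w)!(a+(ka-1)) then ?W (u@y@w) else 0)"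
      unfolding M by (rule sum_bits3)
    also have "\<dots> = (\<Sum>u\<in>bits a. \<Sum>y\<in>bits ?N. \<Sum>w\<in>bits c. if y!(ka-1) then ?W (u@y@w) else 0)"
    proof (intro sum.cong refl)
      fix u y w assume h: "u \<in> bits a" "y \<in> bits ?N" "w \<in> bits c"
      then have "(u@y@w)!(a+(ka-1)) = y!(ka-1)" using ka kb by (intro nth_in) auto
      then show "(if (u@y@w)!(a+(ka-1)) then ?W (u@y@w) else 0) = (if y!(ka-1) then ?W (u@y@w) else 0)"
        by (simp only:)
    qed
    finally show ?thesis .
  qed
  have PB: "probT T kb (redr a2 kb c2 \<rho>)
      = (\<Sum>u\<in>bits a. \<Sum>y\<in>bits ?N. \<Sum>w\<in>bits c. if y!(ka+kb-1) then ?W (u@y@w) else 0)"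
  proof -
    have "probT T kb (redr a2 kb c2 \<rho>) = (\<Sum>v\<in>bits M. if v!(a2+kb-1) then ?W v else 0)"
      by (rule prob_redr[OF T kb B(2)])
    also have "\<dots> = (\<Sum>v\<in>bits M. if v!(a+(ka+kb-1)) then ?W v else 0)"
      using B(1) kb by (simp add: add.assoc)
    also have "\<dots> = (\<Sum>u\<in>bits a. \<Sum>y\<in>bits ?N. \<Sum>w\<in>bits c. if (u@y@w)!(a+(ka+kb-1)) then ?W (u@y@w) else 0)"
      unfolding M by (rule sum_bits3)
    also have "\<dots> = (\<Sum>u\<in>bits a. \<Sum>y\<in>bits ?N. \<Sum>w\<in>bits c. if y!(ka+kb-1) then ?W (u@y@w) else 0)"
    proof (intro sum.cong refl)
      fix u y w assume h: "u \<in> bits a" "y \<in> bits ?N" "w \<in> bits c"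
      then have "(u@y@w)!(a+(ka+kb-1)) = y!(ka+kb-1)" using ka kb by (intro nth_in) auto
      then show "(if (u@y@w)!(a+(ka+kb-1)) then ?W (u@y@w) else 0) = (if y!(ka+kb-1) then ?W (u@y@w) else 0)"
        by (simp only:)
    qed
    finally show ?thesis .
  qed
  have le: "\<And>P. (\<forall>y. ?H y \<longrightarrow> P y) \<Longrightarrow>
     (\<Sum>u\<in>bits a. \<Sum>y\<in>bits ?N. \<Sum>w\<in>bits c. if ?H y \<noteq> last y then ?W (u@y@w) else 0)
     \<le> (\<Sum>u\<in>bits a. \<Sum>y\<in>bits ?N. \<Sum>w\<in>bits c. if P y then ?W (u@y@w) else 0)"
  proof -
    fix P assume P: "\<forall>y. ?H y \<longrightarrow> P y"
    show "(\<Sum>u\<in>bits a. \<Sum>y\<in>bits ?N. \<Sum>w\<in>bits c. if ?H y \<noteq> last y then ?W (u@y@w) else 0)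
     \<le> (\<Sum>u\<in>bits a. \<Sum>y\<in>bits ?N. \<Sum>w\<in>bits c. if P y then ?W (u@y@w) else 0)"
    proof (intro sum_mono)
      fix u y w assume a: "u \<in> bits a" "y \<in> bits ?N" "w \<in> bits c"
      show "(if ?H y \<noteq> last y then ?W (u@y@w) else 0) \<le> (if P y then ?W (u@y@w) else 0)"
      proof (cases "last y")
        case True then show ?thesis using z2[OF a] w(2) by simp
      next
        case False then show ?thesis using P w(2)[of "u@y@w"] by auto
      qed
    qed
  qed
  show ?thesis using le[of "\<lambda>y. y!(ka-1)"] le[of "\<lambda>y. y!(ka+kb-1)"] G PA PB by simp
qed



lemma sum_At_expand: "sum_list (map At (expand b)) = At b"
  by (cases b) auto

lemma sum_At_concat: "sum_list (map At (concat (map expand L))) = sum_list (map At L)"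
  by (induction L) (auto simp: sum_At_expand)

lemma sum_At_level: "sum_list (map At (level g i)) = At g"
  by (induction i) (auto simp: sum_At_concat)

lemma depth_expand: "b \<in> set (expand c) \<Longrightarrow> depth b \<le> depth c - 1"
  by (cases c) auto

lemma depth_level: "b \<in> set (level g i) \<Longrightarrow> depth b \<le> depth g - i"
proof (induction i arbitrary: b)
  case 0 then show ?case by simp
next
  case (Suc i)
  then obtain c where c: "c \<in> set (level g i)" "b \<in> set (expand c)" by auto
  have "depth b \<le> depth c - 1" by (rule depth_expand[OF c(2)])
  moreover have "depth c \<le> depth g - i" by (rule Suc.IH[OF c(1)])
  ultimately show ?case by simp
qed

lemma depth_nonatomic: "\<not> atomic b \<Longrightarrow> 1 \<le> depth b"
  by (cases b) auto

lemma occ_lt: "occurrence g b i j \<Longrightarrow> \<not> atomic b \<Longrightarrow> i < depth g"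
proof -
  assume o: "occurrence g b i j" and na: "\<not> atomic b"
  hence "b \<in> set (level g i)" unfolding occurrence_def by (metis nth_mem)
  hence "depth b \<le> depth g - i" by (rule depth_level)
  moreover have "1 \<le> depth b" by (rule depth_nonatomic[OF na])
  ultimately show ?thesis by simp
qed

lemma level_Suc_split:
  assumes "j < length (level g i)" "level g i ! j = b"
  shows "level g (Suc i) = concat (map expand (take j (level g i))) @ expand b @ concat (map expand (drop (Suc j) (level g i)))"
proof -
  have "level g i = take j (level g i) @ b # drop (Suc j) (level g i)"
    using assms by (metis id_take_nth_drop)
  hence "level g (Suc i) = concat (map expand (take j (level g i) @ b # drop (Suc j) (level g i)))"
    by (metis level.simps(2))
  then show ?thesis by simp
qed

lemma ctxmean_redr:
  assumes "occurrence g b i j"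
  shows "ctxmean Hol g i j = redr (sum_list (take j (map At (level g i)))) (At b) (sum_list (drop (Suc j) (map At (level g i)))) (Hol g i)"
  using assms by (simp add: ctxmean_def red_redr occurrence_def)

lemma occ_dims:
  assumes "occurrence g b i j"
  shows "At g = sum_list (take j (map At (level g i))) + At b + sum_list (drop (Suc j) (map At (level g i)))"
proof -
  have j: "j < length (level g i)" "level g i ! j = b" using assms by (auto simp: occurrence_def)
  have "map At (level g i) = take j (map At (level g i)) @ At b # drop (Suc j) (map At (level g i))"
    using j by (metis id_take_nth_drop length_map nth_map)
  hence "sum_list (map At (level g i)) = sum_list (take j (map At (level g i))) + At b + sum_list (drop (Suc j) (map At (level g i)))"
    by (metis add.assoc sum_list.Cons sum_list_append)
  then show ?thesis by (simp add: sum_At_level)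
qed

lemma child:
  assumes o: "occurrence g b i j" and na: "\<not> atomic b" and c: "c < length (expand b)"
  defines "j' \<equiv> length (concat (map expand (take j (level g i))))"
  shows "occurrence g (expand b ! c) (Suc i) (j'+c)"
    and "ctxmean Hol g (Suc i) (j'+c) =
      redr (sum_list (take j (map At (level g i))) + sum_list (take c (map At (expand b))))
           (At (expand b ! c))
           (sum_list (drop (Suc c) (map At (expand b))) + sum_list (drop (Suc j) (map At (level g i))))
           (Hol g (Suc i))"
proof -
  have j: "j < length (level g i)" "level g i ! j = b" using o by (auto simp: occurrence_def)
  have lt: "i < depth g" by (rule occ_lt[OF o na])
  let ?X = "concat (map expand (take j (level g i)))"
  let ?Z = "concat (map expand (drop (Suc j) (level g i)))"
  have L: "level g (Suc i) = ?X @ expand b @ ?Z" by (rule level_Suc_split[OF j])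
  have nth: "level g (Suc i) ! (j'+c) = expand b ! c" using c unfolding L j'_def by (simp add: nth_append)
  have len: "j'+c < length (level g (Suc i))" using c unfolding L j'_def by simp
  show occ: "occurrence g (expand b ! c) (Suc i) (j'+c)"
    using lt nth len by (simp add: occurrence_def)
  have tk: "take (j'+c) (map At (level g (Suc i))) = map At ?X @ take c (map At (expand b))"
    unfolding L j'_def using c by simp
  have dr: "drop (Suc (j'+c)) (map At (level g (Suc i))) = drop (Suc c) (map At (expand b)) @ map At ?Z"
    unfolding L j'_def using c by (simp add: Suc_diff_le)
  show "ctxmean Hol g (Suc i) (j'+c) =
      redr (sum_list (take j (map At (level g i))) + sum_list (take c (map At (expand b))))
           (At (expand b ! c))
           (sum_list (drop (Suc c) (map At (expand b))) + sum_list (drop (Suc j) (map At (level g i))))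
           (Hol g (Suc i))"
    unfolding ctxmean_redr[OF occ] tk dr
    by (simp add: sum_At_concat take_map drop_map)
qed

lemma gate_step:
  assumes H: "holistic T Hol" and T: "unitary1 T" and o: "occurrence g b i j" and na: "\<not> atomic b"
  shows "ctxmean Hol g i j = applyD (At b) (nodegate T b)
           (redr (sum_list (take j (map At (level g i)))) (At b) (sum_list (drop (Suc j) (map At (level g i)))) (Hol g (Suc i)))"
proof -
  have j: "j < length (level g i)" "level g i ! j = b" using o by (auto simp: occurrence_def)
  have lt: "i < depth g" by (rule occ_lt[OF o na])
  let ?F = "\<lambda>b. (At b, nodegate T b)"
  let ?pre = "map ?F (take j (level g i))" and ?post = "map ?F (drop (Suc j) (level g i))"
  have Li: "level g i = take j (level g i) @ b # drop (Suc j) (level g i)"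
    using j by (metis id_take_nth_drop)
  have LG: "levelgate T g i = tensor_list (?pre @ (At b, nodegate T b) # ?post)"
    unfolding levelgate_def by (subst Li) simp
  have Ag: "At g = sum_list (map fst (?pre @ (At b, nodegate T b) # ?post))"
  proof -
    have "sum_list (map At (level g i)) = sum_list (map fst (?pre @ (At b, nodegate T b) # ?post))"
      by (subst Li) (simp add: comp_def)
    then show ?thesis by (simp add: sum_At_level)
  qed
  have hol: "Hol g i = applyD (At g) (levelgate T g i) (Hol g (Suc i))"
    using H lt unfolding holistic_def by blast
  have u: "\<forall>p\<in>set ?pre. unitop (fst p) (snd p)" "\<forall>p\<in>set ?post. unitop (fst p) (snd p)"
    using nodegate_unit[OF T] by (auto simp: unitop_def)
  have s: "supp (At b) (nodegate T b)" using nodegate_unit[OF T] by blast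
  have spre: "sum_list (map fst ?pre) = sum_list (take j (map At (level g i)))"
    by (simp add: comp_def take_map)
  have spost: "sum_list (map fst ?post) = sum_list (drop (Suc j) (map At (level g i)))"
    by (simp add: comp_def drop_map)
  have "ctxmean Hol g i j = redr (sum_list (map fst ?pre)) (At b) (sum_list (map fst ?post))
          (applyD (sum_list (map fst (?pre @ (At b, nodegate T b) # ?post))) (tensor_list (?pre @ (At b, nodegate T b) # ?post)) (Hol g (Suc i)))"
    unfolding ctxmean_redr[OF o] spre spost hol LG Ag[symmetric] ..
  also have "\<dots> = applyD (At b) (nodegate T b) (redr (sum_list (map fst ?pre)) (At b) (sum_list (map fst ?post)) (Hol g (Suc i)))"
    by (rule PT_list[OF u s])
  finally show ?thesis unfolding spre spost .
qed

lemma holmean_eq: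
  assumes H: "holistic T Hol" and o: "occurrence g b i j"
  shows "holmean Hol g b = ctxmean Hol g i j"
proof -
  have ex: "\<exists>\<rho> i j. occurrence g b i j \<and> \<rho> = ctxmean Hol g i j" using o by blast
  obtain i' j' where o': "occurrence g b i' j'" and e: "holmean Hol g b = ctxmean Hol g i' j'"
    using someI_ex[OF ex] unfolding holmean_def by blast
  have lb: "level g i ! j = b" using o by (simp add: occurrence_def)
  have "ctxmean Hol g i j = ctxmean Hol g i' j'"
    using H o o' lb unfolding holistic_def by metis
  then show ?thesis using e by simp
qed



lemma occ_density:
  assumes H: "holistic T Hol" and o: "occurrence g b i j"
  shows "density (At g) (Hol g i)"
  using H o unfolding holistic_def occurrence_def by blast

lemma occ_bounds:
  assumes H: "holistic T Hol" and T: "unitary1 T" and o: "occurrence g b i j"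
  shows "0 \<le> probT T (At b) (ctxmean Hol g i j) \<and> probT T (At b) (ctxmean Hol g i j) \<le> 1"
  unfolding ctxmean_redr[OF o]
  by (rule prob_bounds[OF T occ_density[OF H o] At_pos occ_dims[OF o]])

lemma occ_neg:
  assumes H: "holistic T Hol" and T: "unitary1 T" and o: "occurrence g (Neg b) i j"
  shows "\<exists>i' j'. occurrence g b i' j' \<and> probT T (At b) (ctxmean Hol g i j) = 1 - probT T (At b) (ctxmean Hol g i' j')"
proof -
  let ?off = "sum_list (take j (map At (level g i)))"
  let ?rest = "sum_list (drop (Suc j) (map At (level g i)))"
  let ?j' = "length (concat (map expand (take j (level g i))))"
  have na: "\<not> atomic (Neg b)" by simp
  have lt: "i < depth g" by (rule occ_lt[OF o na])
  have o2: "occurrence g b (Suc i) (?j'+0)" using child(1)[OF o na, of 0] by simp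
  have c2: "ctxmean Hol g (Suc i) (?j'+0) = redr ?off (At b) ?rest (Hol g (Suc i))"
    using child(2)[OF o na, of 0 Hol] by simp
  have d: "density (At g) (Hol g (Suc i))" by (rule occ_density[OF H o2])
  have M: "At g = ?off + At b + ?rest" using occ_dims[OF o] by simp
  have "probT T (At b) (ctxmean Hol g i j)
      = probT T (At b) (applyD (At b) (gateT T (At b) (NOTg (At b))) (redr ?off (At b) ?rest (Hol g (Suc i))))"
    using gate_step[OF H T o na] by simp
  also have "\<dots> = 1 - probT T (At b) (redr ?off (At b) ?rest (Hol g (Suc i)))"
    by (rule prob_not[OF T d At_pos M])
  finally show ?thesis using o2 c2 by metis
qed

lemma occ_and:
  assumes H: "holistic T Hol" and T: "unitary1 T" and o: "occurrence g (Tf a b Ff) i j"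
  shows "(\<exists>i' j'. occurrence g a i' j' \<and> probT T (At (Tf a b Ff)) (ctxmean Hol g i j) \<le> probT T (At a) (ctxmean Hol g i' j'))
       \<and> (\<exists>i' j'. occurrence g b i' j' \<and> probT T (At (Tf a b Ff)) (ctxmean Hol g i j) \<le> probT T (At b) (ctxmean Hol g i' j'))"
proof -
  let ?off = "sum_list (take j (map At (level g i)))"
  let ?rest = "sum_list (drop (Suc j) (map At (level g i)))"
  let ?j' = "length (concat (map expand (take j (level g i))))"
  let ?\<rho> = "Hol g (Suc i)"
  have na: "\<not> atomic (Tf a b Ff)" by simp
  have oa: "occurrence g a (Suc i) (?j'+0)" using child(1)[OF o na, of 0] by simp
  have ca: "ctxmean Hol g (Suc i) (?j'+0) = redr ?off (At a) (At b + 1 + ?rest) ?\<rho>"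
    using child(2)[OF o na, of 0 Hol] by (simp add: add.assoc)
  have ob: "occurrence g b (Suc i) (?j'+1)" using child(1)[OF o na, of 1] by simp
  have cb: "ctxmean Hol g (Suc i) (?j'+1) = redr (?off + At a) (At b) (1 + ?rest) ?\<rho>"
    using child(2)[OF o na, of 1 Hol] by simp
  have of: "occurrence g Ff (Suc i) (?j'+2)" using child(1)[OF o na, of 2] by simp
  have cf: "ctxmean Hol g (Suc i) (?j'+2) = redr (?off + (At a + At b)) 1 ?rest ?\<rho>"
    using child(2)[OF o na, of 2 Hol] by simp
  have Ff: "redr (?off + (At a + At b)) 1 ?rest ?\<rho> = projT T 1 False"
    using H of cf unfolding holistic_def by metis
  have d: "density (At g) ?\<rho>" by (rule occ_density[OF H oa])
  have M: "At g = ?off + (At a + At b + 1) + ?rest" using occ_dims[OF o] by simp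
  have g: "ctxmean Hol g i j = applyD (At a + At b + 1) (gateT T (At a + At b + 1) (Toffg (At a) (At b) 1))
              (redr ?off (At a + At b + 1) ?rest ?\<rho>)"
    using gate_step[OF H T o na] by simp
  have key: "probT T (At a + At b + 1) (applyD (At a + At b + 1) (gateT T (At a + At b + 1) (Toffg (At a) (At b) 1))
              (redr ?off (At a + At b + 1) ?rest ?\<rho>)) \<le> probT T (At a) (redr ?off (At a) (At b + 1 + ?rest) ?\<rho>)
     \<and> probT T (At a + At b + 1) (applyD (At a + At b + 1) (gateT T (At a + At b + 1) (Toffg (At a) (At b) 1))
              (redr ?off (At a + At b + 1) ?rest ?\<rho>)) \<le> probT T (At b) (redr (?off + At a) (At b) (1 + ?rest) ?\<rho>)"
    by (rule prob_and[OF T d At_pos At_pos M Ff]) (use M in simp_all)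
  show ?thesis
  proof (intro conjI)
    show "\<exists>i' j'. occurrence g a i' j' \<and> probT T (At (Tf a b Ff)) (ctxmean Hol g i j) \<le> probT T (At a) (ctxmean Hol g i' j')"
      using oa ca key g by (intro exI[of _ "Suc i"] exI[of _ "?j'+0"]) simp
    show "\<exists>i' j'. occurrence g b i' j' \<and> probT T (At (Tf a b Ff)) (ctxmean Hol g i j) \<le> probT T (At b) (ctxmean Hol g i' j')"
      using ob cb key g by (intro exI[of _ "Suc i"] exI[of _ "?j'+1"]) simp
  qed
qed



lemma occ_sub: "occurrence g b i j \<Longrightarrow> subformula b g"
  unfolding subformula_def by blast

lemma c1a:
  shows "And a b \<Turnstile> a"
  unfolding consequence_def And_def
proof (intro allI impI; elim conjE)
  fix T g Hol assume T: "unitary1 T" and s: "subformula (Tf a b Ff) g" and "subformula a g" and H: "holistic T Hol"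
  obtain i j where o: "occurrence g (Tf a b Ff) i j" using s unfolding subformula_def by blast
  from conjunct1[OF occ_and[OF H T o]] obtain i' j' where oa: "occurrence g a i' j'"
    and le: "probT T (At (Tf a b Ff)) (ctxmean Hol g i j) \<le> probT T (At a) (ctxmean Hol g i' j')" by blast
  show "probT T (At (Tf a b Ff)) (holmean Hol g (Tf a b Ff)) \<le> probT T (At a) (holmean Hol g a)"
    using holmean_eq[OF H o] holmean_eq[OF H oa] le by simp
qed

lemma c1b:
  shows "And a b \<Turnstile> b"
  unfolding consequence_def And_def
proof (intro allI impI; elim conjE)
  fix T g Hol assume T: "unitary1 T" and s: "subformula (Tf a b Ff) g" and "subformula b g" and H: "holistic T Hol"
  obtain i j where o: "occurrence g (Tf a b Ff) i j" using s unfolding subformula_def by blast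
  from conjunct2[OF occ_and[OF H T o]] obtain i' j' where ob: "occurrence g b i' j'"
    and le: "probT T (At (Tf a b Ff)) (ctxmean Hol g i j) \<le> probT T (At b) (ctxmean Hol g i' j')" by blast
  show "probT T (At (Tf a b Ff)) (holmean Hol g (Tf a b Ff)) \<le> probT T (At b) (holmean Hol g b)"
    using holmean_eq[OF H o] holmean_eq[OF H ob] le by simp
qed

lemma c2:
  assumes ab: "a \<Turnstile> b"
  shows "And a d \<Turnstile> b"
  unfolding consequence_def And_def
proof (intro allI impI; elim conjE)
  fix T g Hol assume T: "unitary1 T" and s: "subformula (Tf a d Ff) g" and sb: "subformula b g" and H: "holistic T Hol"
  obtain i j where o: "occurrence g (Tf a d Ff) i j" using s unfolding subformula_def by blast
  from conjunct1[OF occ_and[OF H T o]] obtain i' j' where oa: "occurrence g a i' j'"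
    and le: "probT T (At (Tf a d Ff)) (ctxmean Hol g i j) \<le> probT T (At a) (ctxmean Hol g i' j')" by blast
  have "probT T (At a) (holmean Hol g a) \<le> probT T (At b) (holmean Hol g b)"
    using ab T occ_sub[OF oa] sb H unfolding consequence_def by blast
  then show "probT T (At (Tf a d Ff)) (holmean Hol g (Tf a d Ff)) \<le> probT T (At b) (holmean Hol g b)"
    using holmean_eq[OF H o] holmean_eq[OF H oa] le by simp
qed

lemma nn_eq:
  assumes H: "holistic T Hol" and T: "unitary1 T" and s: "subformula (Neg (Neg a)) g"
  shows "probT T (At (Neg (Neg a))) (holmean Hol g (Neg (Neg a))) = probT T (At a) (holmean Hol g a)"
proof -
  obtain i j where o: "occurrence g (Neg (Neg a)) i j" using s unfolding subformula_def by blast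
  obtain i' j' where o': "occurrence g (Neg a) i' j'"
    and e1: "probT T (At (Neg a)) (ctxmean Hol g i j) = 1 - probT T (At (Neg a)) (ctxmean Hol g i' j')"
    using occ_neg[OF H T o] by blast
  obtain i'' j'' where o'': "occurrence g a i'' j''"
    and e2: "probT T (At a) (ctxmean Hol g i' j') = 1 - probT T (At a) (ctxmean Hol g i'' j'')"
    using occ_neg[OF H T o'] by blast
  show ?thesis using e1 e2 holmean_eq[OF H o] holmean_eq[OF H o''] by simp
qed

lemma c3: "Neg (Neg a) \<equiv>\<^sub>f a"
  unfolding equivalent_def consequence_def
  using nn_eq by (metis order_refl)

lemma c4:
  assumes ab: "a \<Turnstile> b"
  shows "Neg b \<Turnstile> Neg a"
  unfolding consequence_def
proof (intro allI impI; elim conjE)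
  fix T g Hol assume T: "unitary1 T" and s1: "subformula (Neg b) g" and s2: "subformula (Neg a) g" and H: "holistic T Hol"
  obtain i1 j1 where o1: "occurrence g (Neg b) i1 j1" using s1 unfolding subformula_def by blast
  obtain i2 j2 where o2: "occurrence g (Neg a) i2 j2" using s2 unfolding subformula_def by blast
  obtain ib jb where ob: "occurrence g b ib jb"
    and e1: "probT T (At b) (ctxmean Hol g i1 j1) = 1 - probT T (At b) (ctxmean Hol g ib jb)"
    using occ_neg[OF H T o1] by blast
  obtain ia ja where oa: "occurrence g a ia ja"
    and e2: "probT T (At a) (ctxmean Hol g i2 j2) = 1 - probT T (At a) (ctxmean Hol g ia ja)"
    using occ_neg[OF H T o2] by blast
  have "probT T (At a) (holmean Hol g a) \<le> probT T (At b) (holmean Hol g b)"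
    using ab T occ_sub[OF oa] occ_sub[OF ob] H unfolding consequence_def by blast
  then show "probT T (At (Neg b)) (holmean Hol g (Neg b)) \<le> probT T (At (Neg a)) (holmean Hol g (Neg a))"
    using e1 e2 holmean_eq[OF H o1] holmean_eq[OF H o2] holmean_eq[OF H oa] holmean_eq[OF H ob] by simp
qed

lemma c5a: "Ff \<Turnstile> b"
  unfolding consequence_def
proof (intro allI impI; elim conjE)
  fix T g Hol assume T: "unitary1 T" and s1: "subformula Ff g" and s2: "subformula b g" and H: "holistic T Hol"
  obtain i1 j1 where o1: "occurrence g Ff i1 j1" using s1 unfolding subformula_def by blast
  obtain i2 j2 where o2: "occurrence g b i2 j2" using s2 unfolding subformula_def by blast
  have "ctxmean Hol g i1 j1 = projT T 1 False" using H o1 unfolding holistic_def by blast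
  then show "probT T (At Ff) (holmean Hol g Ff) \<le> probT T (At b) (holmean Hol g b)"
    using holmean_eq[OF H o1] holmean_eq[OF H o2] occ_bounds[OF H T o2] prob_proj[OF T, of False] by simp
qed

lemma c5b: "b \<Turnstile> Tt"
  unfolding consequence_def
proof (intro allI impI; elim conjE)
  fix T g Hol assume T: "unitary1 T" and s1: "subformula b g" and s2: "subformula Tt g" and H: "holistic T Hol"
  obtain i1 j1 where o1: "occurrence g Tt i1 j1" using s2 unfolding subformula_def by blast
  obtain i2 j2 where o2: "occurrence g b i2 j2" using s1 unfolding subformula_def by blast
  have "ctxmean Hol g i1 j1 = projT T 1 True" using H o1 unfolding holistic_def by blast
  then show "probT T (At b) (holmean Hol g b) \<le> probT T (At Tt) (holmean Hol g Tt)"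
    using holmean_eq[OF H o1] holmean_eq[OF H o2] occ_bounds[OF H T o2] prob_proj[OF T, of True] by simp
qed

theorem theorem5p1:
  shows "(\<forall>a b. And a b \<Turnstile> a \<and> And a b \<Turnstile> b)
       \<and> (\<forall>a b d. a \<Turnstile> b \<longrightarrow> And a d \<Turnstile> b)
       \<and> (\<forall>a. Neg (Neg a) \<equiv>\<^sub>f a)
       \<and> (\<forall>a b. a \<Turnstile> b \<longrightarrow> Neg b \<Turnstile> Neg a)
       \<and> (\<forall>b. Ff \<Turnstile> b \<and> b \<Turnstile> Tt)"
  using c1a c1b c2 c3 c4 c5a c5b by blast


end
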